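(* $(\mathcal{D}, \delta, \varepsilon)$ is a comonad on $\mathsf{CLAC}$.
   Context: Composition is written in diagrammatic order ($fg$ means first $f$, then $g$). A left additive category is a category whose hom-sets are commutative monoids with $f(g+h)=fg+fh$ and $f0=0$; a map $h$ is additive if $(f+g)h=fh+gh$ and $0h=0$. A Cartesian left additive category is a left additive category with finite products whose projections are additive. $\mathsf{CLAC}$ is the category of Cartesian left additive categories and strict Cartesian left additive functors (functors preserving finite products strictly, i.e. $\mathsf{F}(A\times B)=\mathsf{F}(A)\times\mathsf{F}(B)$, terminal object and projections preserved on the nose, and preserving sums and zeros). For a Cartesian left additive category $\mathbb{X}$, let $\mathsf{P}(A)=A\times A$, $\mathsf{P}(f)=f\times f$. A pre-$\mathsf{D}$-sequence $f_\bullet: A \to B$ is a sequence $(f_0,f_1,\dots)$ with $f_n:\mathsf{P}^n(A)\to B$; for maps $h,k$ of $\mathbb{X}$ set $(h\cdot f_\bullet)_n=\mathsf{P}^n(h)f_n$ and $(f_\bullet\cdot k)_n=f_n k$. The tangent is $\mathsf{T}(f_\bullet)_n=\langle \mathsf{P}^n(\pi_0)f_n, f_{n+1}\rangle$ and the differential is $\mathsf{D}[f_\bullet]_n=f_{n+1}$. Identities are $i_0=1$, $i_n=\pi_1\pi_1\cdots\pi_1$ ($n$ times), composition is $(f_\bullet\ast g_\bullet)_n=\mathsf{T}^n(f_\bullet)_0\, g_n$, sums and zero are pointwise, projections are $i_\bullet\cdot\pi_j$ and pairing is pointwise $\langle f_\bullet,g_\bullet\rangle_n=\langle f_n,g_n\rangle$.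 A $\mathsf{D}$-sequence is a pre-$\mathsf{D}$-sequence such that for all $n$: $\langle 1,0\rangle\cdot\mathsf{D}^{n+1}[f_\bullet]=0_\bullet$; $(1\times(\pi_0+\pi_1))\cdot\mathsf{D}^{n+1}[f_\bullet]=((1\times\pi_0)\cdot\mathsf{D}^{n+1}[f_\bullet])+((1\times\pi_1)\cdot\mathsf{D}^{n+1}[f_\bullet])$; $\ell\cdot\mathsf{D}^{n+2}[f_\bullet]=\mathsf{D}^{n+1}[f_\bullet]$; $c\cdot\mathsf{D}^{n+2}[f_\bullet]=\mathsf{D}^{n+2}[f_\bullet]$, where $\ell=\langle 1,0\rangle\times\langle 0,1\rangle$ and $c=1\times\langle\pi_1,\pi_0\rangle\times 1$. $\mathcal{D}[\mathbb{X}]$ is the Cartesian left additive category of $\mathsf{D}$-sequences of $\mathbb{X}$ (same objects as $\mathbb{X}$). For a strict Cartesian left additive functor $\mathsf{F}$, $\mathcal{D}[\mathsf{F}]$ acts as $\mathsf{F}$ on objects and by $\mathcal{D}[\mathsf{F}](f_\bullet)_n=\mathsf{F}(f_n)$. The counit $\varepsilon:\mathcal{D}[\mathbb{X}]\to\mathbb{X}$ is the identity on objects and $\varepsilon(f_\bullet)=f_0$; the comultiplication $\delta:\mathcal{D}[\mathbb{X}]\to\mathcal{D}[\mathcal{D}[\mathbb{X}]]$ is the identity on objects and $\delta(f_\bullet)_0=f_\bullet$, $\delta(f_\bullet)_n=\mathsf{D}^n[f_\bullet]$. *)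

theory Defs
  imports Main
begin

text \<open>Composition is diagrammatic: ccomp X f g means first f, then g.\<close>

record ('o, 'a) clac =
  cObj  :: "'o set"
  cArr  :: "'a set"
  cdom  :: "'a \<Rightarrow> 'o"
  ccod  :: "'a \<Rightarrow> 'o"
  ccomp :: "'a \<Rightarrow> 'a \<Rightarrow> 'a"
  cid   :: "'o \<Rightarrow> 'a"
  cadd  :: "'a \<Rightarrow> 'a \<Rightarrow> 'a"
  czero :: "'o \<Rightarrow> 'o \<Rightarrow> 'a"
  cprod :: "'o \<Rightarrow> 'o \<Rightarrow> 'o"
  cterm :: "'o"
  cpi0  :: "'o \<Rightarrow> 'o \<Rightarrow> 'a"
  cpi1  :: "'o \<Rightarrow> 'o \<Rightarrow> 'a"
  cpair :: "'a \<Rightarrow> 'a \<Rightarrow> 'a"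

definition hom :: "('o, 'a) clac \<Rightarrow> 'o \<Rightarrow> 'o \<Rightarrow> 'a set" where
  "hom X A B = {f \<in> cArr X. cdom X f = A \<and> ccod X f = B}"

definition is_clac :: "('o, 'a) clac \<Rightarrow> bool" where
  "is_clac X \<longleftrightarrow>
    \<comment> \<open>category\<close>
    (\<forall>f\<in>cArr X. cdom X f \<in> cObj X \<and> ccod X f \<in> cObj X)
  \<and> (\<forall>A\<in>cObj X. cid X A \<in> hom X A A)
  \<and> (\<forall>A\<in>cObj X. \<forall>B\<in>cObj X. \<forall>C\<in>cObj X. \<forall>f\<in>hom X A B. \<forall>g\<in>hom X B C.
        ccomp X f g \<in> hom X A C)
  \<and> (\<forall>A\<in>cObj X. \<forall>B\<in>cObj X. \<forall>C\<in>cObj X. \<forall>D\<in>cObj X.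
        \<forall>f\<in>hom X A B. \<forall>g\<in>hom X B C. \<forall>h\<in>hom X C D.
        ccomp X (ccomp X f g) h = ccomp X f (ccomp X g h))
  \<and> (\<forall>A\<in>cObj X. \<forall>B\<in>cObj X. \<forall>f\<in>hom X A B.
        ccomp X (cid X A) f = f \<and> ccomp X f (cid X B) = f)
    \<comment> \<open>hom-sets are commutative monoids\<close>
  \<and> (\<forall>A\<in>cObj X. \<forall>B\<in>cObj X. \<forall>f\<in>hom X A B. \<forall>g\<in>hom X A B.
        cadd X f g \<in> hom X A B \<and> cadd X f g = cadd X g f)
  \<and> (\<forall>A\<in>cObj X. \<forall>B\<in>cObj X. \<forall>f\<in>hom X A B. \<forall>g\<in>hom X A B. \<forall>h\<in>hom X A B.
        cadd X (cadd X f g) h = cadd X f (cadd X g h))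
  \<and> (\<forall>A\<in>cObj X. \<forall>B\<in>cObj X. czero X A B \<in> hom X A B \<and>
        (\<forall>f\<in>hom X A B. cadd X f (czero X A B) = f))
    \<comment> \<open>left additivity: f(g+h) = fg + fh, f0 = 0\<close>
  \<and> (\<forall>A\<in>cObj X. \<forall>B\<in>cObj X. \<forall>C\<in>cObj X. \<forall>f\<in>hom X A B. \<forall>g\<in>hom X B C. \<forall>h\<in>hom X B C.
        ccomp X f (cadd X g h) = cadd X (ccomp X f g) (ccomp X f h)
      \<and> ccomp X f (czero X B C) = czero X A C)
    \<comment> \<open>terminal object\<close>
  \<and> cterm X \<in> cObj X
  \<and> (\<forall>A\<in>cObj X. \<exists>!h. h \<in> hom X A (cterm X))
    \<comment> \<open>binary products\<close>
  \<and> (\<forall>A\<in>cObj X. \<forall>B\<in>cObj X. cprod X A B \<in> cObj X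
        \<and> cpi0 X A B \<in> hom X (cprod X A B) A \<and> cpi1 X A B \<in> hom X (cprod X A B) B)
  \<and> (\<forall>A\<in>cObj X. \<forall>B\<in>cObj X. \<forall>C\<in>cObj X. \<forall>f\<in>hom X C A. \<forall>g\<in>hom X C B.
        cpair X f g \<in> hom X C (cprod X A B)
      \<and> ccomp X (cpair X f g) (cpi0 X A B) = f
      \<and> ccomp X (cpair X f g) (cpi1 X A B) = g)
  \<and> (\<forall>A\<in>cObj X. \<forall>B\<in>cObj X. \<forall>C\<in>cObj X. \<forall>h\<in>hom X C (cprod X A B).
        h = cpair X (ccomp X h (cpi0 X A B)) (ccomp X h (cpi1 X A B)))
    \<comment> \<open>projections are additive\<close>
  \<and> (\<forall>A\<in>cObj X. \<forall>B\<in>cObj X. \<forall>C\<in>cObj X. \<forall>f\<in>hom X C (cprod X A B). \<forall>g\<in>hom X C (cprod X A B).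
        ccomp X (cadd X f g) (cpi0 X A B) = cadd X (ccomp X f (cpi0 X A B)) (ccomp X g (cpi0 X A B))
      \<and> ccomp X (cadd X f g) (cpi1 X A B) = cadd X (ccomp X f (cpi1 X A B)) (ccomp X g (cpi1 X A B)))
  \<and> (\<forall>A\<in>cObj X. \<forall>B\<in>cObj X. \<forall>C\<in>cObj X.
        ccomp X (czero X C (cprod X A B)) (cpi0 X A B) = czero X C A
      \<and> ccomp X (czero X C (cprod X A B)) (cpi1 X A B) = czero X C B)"

record ('o, 'p, 'a, 'b) sfun =
  fobj :: "'o \<Rightarrow> 'p"
  farr :: "'a \<Rightarrow> 'b"

definition is_sclf :: "('o, 'a) clac \<Rightarrow> ('p, 'b) clac \<Rightarrow> ('o, 'p, 'a, 'b) sfun \<Rightarrow> bool" where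
  "is_sclf X Y F \<longleftrightarrow>
    (\<forall>A\<in>cObj X. fobj F A \<in> cObj Y)
  \<and> (\<forall>A\<in>cObj X. \<forall>B\<in>cObj X. \<forall>f\<in>hom X A B. farr F f \<in> hom Y (fobj F A) (fobj F B))
  \<and> (\<forall>A\<in>cObj X. farr F (cid X A) = cid Y (fobj F A))
  \<and> (\<forall>A\<in>cObj X. \<forall>B\<in>cObj X. \<forall>C\<in>cObj X. \<forall>f\<in>hom X A B. \<forall>g\<in>hom X B C.
        farr F (ccomp X f g) = ccomp Y (farr F f) (farr F g))
  \<and> (\<forall>A\<in>cObj X. \<forall>B\<in>cObj X.
        fobj F (cprod X A B) = cprod Y (fobj F A) (fobj F B)
      \<and> farr F (cpi0 X A B) = cpi0 Y (fobj F A) (fobj F B)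
      \<and> farr F (cpi1 X A B) = cpi1 Y (fobj F A) (fobj F B))
  \<and> fobj F (cterm X) = cterm Y
  \<and> (\<forall>A\<in>cObj X. \<forall>B\<in>cObj X. \<forall>f\<in>hom X A B. \<forall>g\<in>hom X A B.
        farr F (cadd X f g) = cadd Y (farr F f) (farr F g))
  \<and> (\<forall>A\<in>cObj X. \<forall>B\<in>cObj X. farr F (czero X A B) = czero Y (fobj F A) (fobj F B))"

definition idF :: "('o, 'o, 'a, 'a) sfun" where
  "idF = \<lparr>fobj = id, farr = id\<rparr>"

definition fcompose :: "('o, 'p, 'a, 'b) sfun \<Rightarrow> ('p, 'q, 'b, 'c) sfun \<Rightarrow> ('o, 'q, 'a, 'c) sfun" where
  "fcompose F G = \<lparr>fobj = fobj G \<circ> fobj F, farr = farr G \<circ> farr F\<rparr>"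

definition feq :: "('o, 'a) clac \<Rightarrow> ('o, 'p, 'a, 'b) sfun \<Rightarrow> ('o, 'p, 'a, 'b) sfun \<Rightarrow> bool" where
  "feq X F G \<longleftrightarrow> (\<forall>A\<in>cObj X. fobj F A = fobj G A) \<and> (\<forall>f\<in>cArr X. farr F f = farr G f)"

definition Pobj :: "('o, 'a) clac \<Rightarrow> 'o \<Rightarrow> 'o" where
  "Pobj X A = cprod X A A"

definition Pn :: "('o, 'a) clac \<Rightarrow> nat \<Rightarrow> 'o \<Rightarrow> 'o" where
  "Pn X n A = (Pobj X ^^ n) A"

definition cross :: "('o, 'a) clac \<Rightarrow> 'a \<Rightarrow> 'a \<Rightarrow> 'a" where
  "cross X h k = cpair X (ccomp X (cpi0 X (cdom X h) (cdom X k)) h)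
                         (ccomp X (cpi1 X (cdom X h) (cdom X k)) k)"

definition Parr :: "('o, 'a) clac \<Rightarrow> 'a \<Rightarrow> 'a" where
  "Parr X f = cross X f f"

definition Pnarr :: "('o, 'a) clac \<Rightarrow> nat \<Rightarrow> 'a \<Rightarrow> 'a" where
  "Pnarr X n f = (Parr X ^^ n) f"

definition lact :: "('o, 'a) clac \<Rightarrow> 'a \<Rightarrow> (nat \<Rightarrow> 'a) \<Rightarrow> (nat \<Rightarrow> 'a)" where
  "lact X h f = (\<lambda>n. ccomp X (Pnarr X n h) (f n))"

definition ract :: "('o, 'a) clac \<Rightarrow> (nat \<Rightarrow> 'a) \<Rightarrow> 'a \<Rightarrow> (nat \<Rightarrow> 'a)" where
  "ract X f k = (\<lambda>n. ccomp X (f n) k)"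

definition Dseq :: "(nat \<Rightarrow> 'a) \<Rightarrow> (nat \<Rightarrow> 'a)" where
  "Dseq f = (\<lambda>n. f (Suc n))"

definition sdom :: "('o, 'a) clac \<Rightarrow> (nat \<Rightarrow> 'a) \<Rightarrow> 'o" where
  "sdom X f = cdom X (f 0)"

definition scod :: "('o, 'a) clac \<Rightarrow> (nat \<Rightarrow> 'a) \<Rightarrow> 'o" where
  "scod X f = ccod X (f 0)"

definition sadd :: "('o, 'a) clac \<Rightarrow> (nat \<Rightarrow> 'a) \<Rightarrow> (nat \<Rightarrow> 'a) \<Rightarrow> (nat \<Rightarrow> 'a)" where
  "sadd X f g = (\<lambda>n. cadd X (f n) (g n))"

definition szero :: "('o, 'a) clac \<Rightarrow> 'o \<Rightarrow> 'o \<Rightarrow> (nat \<Rightarrow> 'a)" where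
  "szero X A B = (\<lambda>n. czero X (Pn X n A) B)"

definition pre_dseq :: "('o, 'a) clac \<Rightarrow> (nat \<Rightarrow> 'a) \<Rightarrow> bool" where
  "pre_dseq X f \<longleftrightarrow> (\<forall>n. f n \<in> hom X (Pn X n (sdom X f)) (scod X f))"

definition dseq :: "('o, 'a) clac \<Rightarrow> (nat \<Rightarrow> 'a) \<Rightarrow> bool" where
  "dseq X f \<longleftrightarrow> pre_dseq X f \<and>
    (\<forall>n. let A = Pn X n (sdom X f); B = scod X f;
             p0 = cpi0 X A A; p1 = cpi1 X A A; one = cid X A; z = czero X A A;
             F1 = (Dseq ^^ (n + 1)) f; F2 = (Dseq ^^ (n + 2)) f
         in lact X (cpair X one z) F1 = szero X A B
          \<and> lact X (cross X one (cadd X p0 p1)) F1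
              = sadd X (lact X (cross X one p0) F1) (lact X (cross X one p1) F1)
          \<and> lact X (cross X (cpair X one z) (cpair X z one)) F2 = F1
          \<and> lact X (cpair X (cross X p0 p0) (cross X p1 p1)) F2 = F2)"

definition tan :: "('o, 'a) clac \<Rightarrow> (nat \<Rightarrow> 'a) \<Rightarrow> (nat \<Rightarrow> 'a)" where
  "tan X f = (\<lambda>n. cpair X (ccomp X (Pnarr X n (cpi0 X (sdom X f) (sdom X f))) (f n)) (f (Suc n)))"

definition scomp :: "('o, 'a) clac \<Rightarrow> (nat \<Rightarrow> 'a) \<Rightarrow> (nat \<Rightarrow> 'a) \<Rightarrow> (nat \<Rightarrow> 'a)" where
  "scomp X f g = (\<lambda>n. ccomp X (((tan X) ^^ n) f 0) (g n))"

primrec iseq :: "('o, 'a) clac \<Rightarrow> 'o \<Rightarrow> nat \<Rightarrow> 'a" where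
  "iseq X A 0 = cid X A"
| "iseq X A (Suc n) = ccomp X (cpi1 X (Pn X n A) (Pn X n A)) (iseq X A n)"

definition Dcat :: "('o, 'a) clac \<Rightarrow> ('o, nat \<Rightarrow> 'a) clac" where
  "Dcat X = \<lparr> cObj = cObj X,
              cArr = {f. dseq X f},
              cdom = sdom X,
              ccod = scod X,
              ccomp = scomp X,
              cid = iseq X,
              cadd = sadd X,
              czero = szero X,
              cprod = cprod X,
              cterm = cterm X,
              cpi0 = (\<lambda>A B. ract X (iseq X (cprod X A B)) (cpi0 X A B)),
              cpi1 = (\<lambda>A B. ract X (iseq X (cprod X A B)) (cpi1 X A B)),
              cpair = (\<lambda>f g n. cpair X (f n) (g n)) \<rparr>"

definition Dfun :: "('o, 'p, 'a, 'b) sfun \<Rightarrow> ('o, 'p, nat \<Rightarrow> 'a, nat \<Rightarrow> 'b) sfun" where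
  "Dfun F = \<lparr>fobj = fobj F, farr = (\<lambda>f n. farr F (f n))\<rparr>"

definition epsF :: "('o, 'o, nat \<Rightarrow> 'a, 'a) sfun" where
  "epsF = \<lparr>fobj = id, farr = (\<lambda>f. f 0)\<rparr>"

definition deltaF :: "('o, 'o, nat \<Rightarrow> 'a, nat \<Rightarrow> nat \<Rightarrow> 'a) sfun" where
  "deltaF = \<lparr>fobj = id, farr = (\<lambda>f n. (Dseq ^^ n) f)\<rparr>"

end

theory Submission
  imports Defs
begin

locale CL =
  fixes X :: "('o, 'a) clac"
  assumes clac: "is_clac X"
begin

abbreviation "ar f \<equiv> f \<in> cArr X"
abbreviation "Ob \<equiv> cObj X"

lemmas ax1 = clac[unfolded is_clac_def, THEN conjunct1]
lemmas ax2 = clac[unfolded is_clac_def, THEN conjunct2, THEN conjunct1]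
lemmas ax3 = clac[unfolded is_clac_def, THEN conjunct2, THEN conjunct2, THEN conjunct1]
lemmas ax4 = clac[unfolded is_clac_def, THEN conjunct2, THEN conjunct2, THEN conjunct2, THEN conjunct1]
lemmas ax5 = clac[unfolded is_clac_def, THEN conjunct2, THEN conjunct2, THEN conjunct2, THEN conjunct2, THEN conjunct1]
lemmas ax6 = clac[unfolded is_clac_def, THEN conjunct2, THEN conjunct2, THEN conjunct2, THEN conjunct2, THEN conjunct2, THEN conjunct1]
lemmas ax7 = clac[unfolded is_clac_def, THEN conjunct2, THEN conjunct2, THEN conjunct2, THEN conjunct2, THEN conjunct2, THEN conjunct2, THEN conjunct1]
lemmas ax8 = clac[unfolded is_clac_def, THEN conjunct2, THEN conjunct2, THEN conjunct2, THEN conjunct2, THEN conjunct2, THEN conjunct2, THEN conjunct2, THEN conjunct1]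
lemmas ax9 = clac[unfolded is_clac_def, THEN conjunct2, THEN conjunct2, THEN conjunct2, THEN conjunct2, THEN conjunct2, THEN conjunct2, THEN conjunct2, THEN conjunct2, THEN conjunct1]
lemmas ax10 = clac[unfolded is_clac_def, THEN conjunct2, THEN conjunct2, THEN conjunct2, THEN conjunct2, THEN conjunct2, THEN conjunct2, THEN conjunct2, THEN conjunct2, THEN conjunct2, THEN conjunct1]
lemmas ax11 = clac[unfolded is_clac_def, THEN conjunct2, THEN conjunct2, THEN conjunct2, THEN conjunct2, THEN conjunct2, THEN conjunct2, THEN conjunct2, THEN conjunct2, THEN conjunct2, THEN conjunct2, THEN conjunct1]
lemmas ax12 = clac[unfolded is_clac_def, THEN conjunct2, THEN conjunct2, THEN conjunct2, THEN conjunct2, THEN conjunct2, THEN conjunct2, THEN conjunct2, THEN conjunct2, THEN conjunct2, THEN conjunct2, THEN conjunct2, THEN conjunct1]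
lemmas ax13 = clac[unfolded is_clac_def, THEN conjunct2, THEN conjunct2, THEN conjunct2, THEN conjunct2, THEN conjunct2, THEN conjunct2, THEN conjunct2, THEN conjunct2, THEN conjunct2, THEN conjunct2, THEN conjunct2, THEN conjunct2, THEN conjunct1]
lemmas ax14 = clac[unfolded is_clac_def, THEN conjunct2, THEN conjunct2, THEN conjunct2, THEN conjunct2, THEN conjunct2, THEN conjunct2, THEN conjunct2, THEN conjunct2, THEN conjunct2, THEN conjunct2, THEN conjunct2, THEN conjunct2, THEN conjunct2, THEN conjunct1]
lemmas ax15 = clac[unfolded is_clac_def, THEN conjunct2, THEN conjunct2, THEN conjunct2, THEN conjunct2, THEN conjunct2, THEN conjunct2, THEN conjunct2, THEN conjunct2, THEN conjunct2, THEN conjunct2, THEN conjunct2, THEN conjunct2, THEN conjunct2, THEN conjunct2, THEN conjunct1]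
lemmas ax16 = clac[unfolded is_clac_def, THEN conjunct2, THEN conjunct2, THEN conjunct2, THEN conjunct2, THEN conjunct2, THEN conjunct2, THEN conjunct2, THEN conjunct2, THEN conjunct2, THEN conjunct2, THEN conjunct2, THEN conjunct2, THEN conjunct2, THEN conjunct2, THEN conjunct2]


lemma dom_ob[simp]: "ar f \<Longrightarrow> cdom X f \<in> Ob" and cod_ob[simp]: "ar f \<Longrightarrow> ccod X f \<in> Ob"
  using ax1 by auto

lemma hom_iff: "f \<in> hom X A B \<longleftrightarrow> ar f \<and> cdom X f = A \<and> ccod X f = B"
  unfolding hom_def by auto

lemma id_ty: "A \<in> Ob \<Longrightarrow> ar (cid X A) \<and> cdom X (cid X A) = A \<and> ccod X (cid X A) = A"
  using ax2 hom_iff by blast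

lemma id_ar[simp]: "A \<in> Ob \<Longrightarrow> ar (cid X A)"
  and id_dom[simp]: "A \<in> Ob \<Longrightarrow> cdom X (cid X A) = A"
  and id_cod[simp]: "A \<in> Ob \<Longrightarrow> ccod X (cid X A) = A"
  using id_ty by auto

lemma comp_ty: "ar f \<Longrightarrow> ar g \<Longrightarrow> ccod X f = cdom X g \<Longrightarrow>
   ar (ccomp X f g) \<and> cdom X (ccomp X f g) = cdom X f \<and> ccod X (ccomp X f g) = ccod X g"
  using ax3[rule_format, of "cdom X f" "ccod X f" "ccod X g" f g] by (simp add: hom_iff)

lemma comp_ar[simp]: "ar f \<Longrightarrow> ar g \<Longrightarrow> ccod X f = cdom X g \<Longrightarrow> ar (ccomp X f g)"
  and comp_dom[simp]: "ar f \<Longrightarrow> ar g \<Longrightarrow> ccod X f = cdom X g \<Longrightarrow> cdom X (ccomp X f g) = cdom X f"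
  and comp_cod[simp]: "ar f \<Longrightarrow> ar g \<Longrightarrow> ccod X f = cdom X g \<Longrightarrow> ccod X (ccomp X f g) = ccod X g"
  using comp_ty by auto

lemma assoc[simp]: "ar f \<Longrightarrow> ar g \<Longrightarrow> ar h \<Longrightarrow> ccod X f = cdom X g \<Longrightarrow> ccod X g = cdom X h \<Longrightarrow>
  ccomp X (ccomp X f g) h = ccomp X f (ccomp X g h)"
  using ax4[rule_format, of "cdom X f" "ccod X f" "ccod X g" "ccod X h" f g h] by (simp add: hom_iff)

lemma id_left[simp]: "ar f \<Longrightarrow> cdom X f = A \<Longrightarrow> ccomp X (cid X A) f = f"
  using ax5[rule_format, of "cdom X f" "ccod X f" f] by (auto simp add: hom_iff)
lemma id_right[simp]: "ar f \<Longrightarrow> ccod X f = A \<Longrightarrow> ccomp X f (cid X A) = f"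
  using ax5[rule_format, of "cdom X f" "ccod X f" f] by (auto simp add: hom_iff)

lemma add_ty: "ar f \<Longrightarrow> ar g \<Longrightarrow> cdom X f = cdom X g \<Longrightarrow> ccod X f = ccod X g \<Longrightarrow>
   ar (cadd X f g) \<and> cdom X (cadd X f g) = cdom X f \<and> ccod X (cadd X f g) = ccod X f"
proof -
  assume a: "ar f" "ar g" "cdom X f = cdom X g" "ccod X f = ccod X g"
  have h: "f \<in> hom X (cdom X f) (ccod X f)" "g \<in> hom X (cdom X f) (ccod X f)"
    using a by (simp_all add: hom_iff)
  have "cadd X f g \<in> hom X (cdom X f) (ccod X f)"
    using ax6[rule_format, OF dom_ob[OF a(1)] cod_ob[OF a(1)] h] by blast
  thus ?thesis by (simp add: hom_iff)
qed

lemma add_ar[simp]: "ar f \<Longrightarrow> ar g \<Longrightarrow> cdom X f = cdom X g \<Longrightarrow> ccod X f = ccod X g \<Longrightarrow> ar (cadd X f g)"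
  and add_dom[simp]: "ar f \<Longrightarrow> ar g \<Longrightarrow> cdom X f = cdom X g \<Longrightarrow> ccod X f = ccod X g \<Longrightarrow> cdom X (cadd X f g) = cdom X f"
  and add_cod[simp]: "ar f \<Longrightarrow> ar g \<Longrightarrow> cdom X f = cdom X g \<Longrightarrow> ccod X f = ccod X g \<Longrightarrow> ccod X (cadd X f g) = ccod X f"
  using add_ty by auto

lemma add_comm: "ar f \<Longrightarrow> ar g \<Longrightarrow> cdom X f = cdom X g \<Longrightarrow> ccod X f = ccod X g \<Longrightarrow> cadd X f g = cadd X g f"
  using ax6[rule_format, of "cdom X f" "ccod X f" f g] by (simp add: hom_iff)

lemma add_assoc[simp]: "ar f \<Longrightarrow> ar g \<Longrightarrow> ar h \<Longrightarrow> cdom X f = cdom X g \<Longrightarrow> ccod X f = ccod X g \<Longrightarrow>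
   cdom X h = cdom X f \<Longrightarrow> ccod X h = ccod X f \<Longrightarrow> cadd X (cadd X f g) h = cadd X f (cadd X g h)"
  using ax7[rule_format, of "cdom X f" "ccod X f" f g h] by (simp add: hom_iff)

lemma add_lcomm: "ar f \<Longrightarrow> ar g \<Longrightarrow> ar h \<Longrightarrow> cdom X f = cdom X g \<Longrightarrow> ccod X f = ccod X g \<Longrightarrow>
   cdom X h = cdom X f \<Longrightarrow> ccod X h = ccod X f \<Longrightarrow> cadd X f (cadd X g h) = cadd X g (cadd X f h)"
  by (metis add_assoc add_comm)

lemma zero_ty: "A \<in> Ob \<Longrightarrow> B \<in> Ob \<Longrightarrow> ar (czero X A B) \<and> cdom X (czero X A B) = A \<and> ccod X (czero X A B) = B"
  using ax8[rule_format, of A B] by (simp add: hom_iff)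

lemma zero_ar[simp]: "A \<in> Ob \<Longrightarrow> B \<in> Ob \<Longrightarrow> ar (czero X A B)"
  and zero_dom[simp]: "A \<in> Ob \<Longrightarrow> B \<in> Ob \<Longrightarrow> cdom X (czero X A B) = A"
  and zero_cod[simp]: "A \<in> Ob \<Longrightarrow> B \<in> Ob \<Longrightarrow> ccod X (czero X A B) = B"
  using zero_ty by auto

lemma add_zero[simp]: "ar f \<Longrightarrow> cdom X f = A \<Longrightarrow> ccod X f = B \<Longrightarrow> cadd X f (czero X A B) = f"
  using ax8[rule_format, of A B] by (auto simp add: hom_iff)

lemma zero_add[simp]: "ar f \<Longrightarrow> cdom X f = A \<Longrightarrow> ccod X f = B \<Longrightarrow> cadd X (czero X A B) f = f"
  by (metis add_comm add_zero cod_ob dom_ob zero_ty)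

lemma comp_add[simp]: "ar f \<Longrightarrow> ar g \<Longrightarrow> ar h \<Longrightarrow> ccod X f = cdom X g \<Longrightarrow> cdom X g = cdom X h \<Longrightarrow> ccod X g = ccod X h \<Longrightarrow>
   ccomp X f (cadd X g h) = cadd X (ccomp X f g) (ccomp X f h)"
  using ax9[rule_format, of "cdom X f" "ccod X f" "ccod X g" f g h] by (simp add: hom_iff)

lemma comp_zero[simp]: "ar f \<Longrightarrow> ccod X f = B \<Longrightarrow> C \<in> Ob \<Longrightarrow>
   ccomp X f (czero X B C) = czero X (cdom X f) C"
  using ax9[rule_format, of "cdom X f" "ccod X f" C f "czero X B C" "czero X B C"] by (auto simp add: hom_iff)

lemma term_ob[simp]: "cterm X \<in> Ob"
  using ax10 .

lemma term_uniq: "ar f \<Longrightarrow> ar g \<Longrightarrow> cdom X f = cdom X g \<Longrightarrow> ccod X f = cterm X \<Longrightarrow> ccod X g = cterm X \<Longrightarrow> f = g"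
  using ax11[rule_format, of "cdom X f"] by (auto simp add: hom_iff)

lemma prod_ty: "A \<in> Ob \<Longrightarrow> B \<in> Ob \<Longrightarrow> cprod X A B \<in> Ob
   \<and> ar (cpi0 X A B) \<and> cdom X (cpi0 X A B) = cprod X A B \<and> ccod X (cpi0 X A B) = A
   \<and> ar (cpi1 X A B) \<and> cdom X (cpi1 X A B) = cprod X A B \<and> ccod X (cpi1 X A B) = B"
  using ax12[rule_format, of A B] by (simp add: hom_iff)

lemma prod_ob[simp]: "A \<in> Ob \<Longrightarrow> B \<in> Ob \<Longrightarrow> cprod X A B \<in> Ob"
  and pi0_ar[simp]: "A \<in> Ob \<Longrightarrow> B \<in> Ob \<Longrightarrow> ar (cpi0 X A B)"
  and pi0_dom[simp]: "A \<in> Ob \<Longrightarrow> B \<in> Ob \<Longrightarrow> cdom X (cpi0 X A B) = cprod X A B"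
  and pi0_cod[simp]: "A \<in> Ob \<Longrightarrow> B \<in> Ob \<Longrightarrow> ccod X (cpi0 X A B) = A"
  and pi1_ar[simp]: "A \<in> Ob \<Longrightarrow> B \<in> Ob \<Longrightarrow> ar (cpi1 X A B)"
  and pi1_dom[simp]: "A \<in> Ob \<Longrightarrow> B \<in> Ob \<Longrightarrow> cdom X (cpi1 X A B) = cprod X A B"
  and pi1_cod[simp]: "A \<in> Ob \<Longrightarrow> B \<in> Ob \<Longrightarrow> ccod X (cpi1 X A B) = B"
  using prod_ty by auto

lemma pair_ty: "ar f \<Longrightarrow> ar g \<Longrightarrow> cdom X f = cdom X g \<Longrightarrow>
   ar (cpair X f g) \<and> cdom X (cpair X f g) = cdom X f \<and> ccod X (cpair X f g) = cprod X (ccod X f) (ccod X g)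
   \<and> ccomp X (cpair X f g) (cpi0 X (ccod X f) (ccod X g)) = f
   \<and> ccomp X (cpair X f g) (cpi1 X (ccod X f) (ccod X g)) = g"
  using ax13[rule_format, of "ccod X f" "ccod X g" "cdom X f" f g] by (simp add: hom_iff)

lemma pair_ar[simp]: "ar f \<Longrightarrow> ar g \<Longrightarrow> cdom X f = cdom X g \<Longrightarrow> ar (cpair X f g)"
  and pair_dom[simp]: "ar f \<Longrightarrow> ar g \<Longrightarrow> cdom X f = cdom X g \<Longrightarrow> cdom X (cpair X f g) = cdom X f"
  and pair_cod[simp]: "ar f \<Longrightarrow> ar g \<Longrightarrow> cdom X f = cdom X g \<Longrightarrow> ccod X (cpair X f g) = cprod X (ccod X f) (ccod X g)"
  using pair_ty by auto

lemma pair_pi0[simp]: "ar f \<Longrightarrow> ar g \<Longrightarrow> cdom X f = cdom X g \<Longrightarrow> ccod X f = A \<Longrightarrow> ccod X g = B \<Longrightarrow>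
    ccomp X (cpair X f g) (cpi0 X A B) = f"
  and pair_pi1[simp]: "ar f \<Longrightarrow> ar g \<Longrightarrow> cdom X f = cdom X g \<Longrightarrow> ccod X f = A \<Longrightarrow> ccod X g = B \<Longrightarrow>
    ccomp X (cpair X f g) (cpi1 X A B) = g"
  using pair_ty by auto

lemma pair_pi0'[simp]: "ar f \<Longrightarrow> ar g \<Longrightarrow> cdom X f = cdom X g \<Longrightarrow> ccod X f = A \<Longrightarrow> ccod X g = B \<Longrightarrow>
    ar h \<Longrightarrow> cdom X h = A \<Longrightarrow> ccomp X (cpair X f g) (ccomp X (cpi0 X A B) h) = ccomp X f h"
proof -
  assume a: "ar f" "ar g" "cdom X f = cdom X g" "ccod X f = A" "ccod X g = B" "ar h" "cdom X h = A"
  have "ccomp X (cpair X f g) (ccomp X (cpi0 X A B) h) = ccomp X (ccomp X (cpair X f g) (cpi0 X A B)) h"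
    using a by (subst assoc) auto
  thus ?thesis using a by simp
qed

lemma pair_pi1'[simp]: "ar f \<Longrightarrow> ar g \<Longrightarrow> cdom X f = cdom X g \<Longrightarrow> ccod X f = A \<Longrightarrow> ccod X g = B \<Longrightarrow>
    ar h \<Longrightarrow> cdom X h = B \<Longrightarrow> ccomp X (cpair X f g) (ccomp X (cpi1 X A B) h) = ccomp X g h"
proof -
  assume a: "ar f" "ar g" "cdom X f = cdom X g" "ccod X f = A" "ccod X g = B" "ar h" "cdom X h = B"
  have "ccomp X (cpair X f g) (ccomp X (cpi1 X A B) h) = ccomp X (ccomp X (cpair X f g) (cpi1 X A B)) h"
    using a by (subst assoc) auto
  thus ?thesis using a by simp
qed

lemma pair_eta: "ar h \<Longrightarrow> ccod X h = cprod X A B \<Longrightarrow> A \<in> Ob \<Longrightarrow> B \<in> Ob \<Longrightarrow>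
   h = cpair X (ccomp X h (cpi0 X A B)) (ccomp X h (cpi1 X A B))"
  using ax14[rule_format, of A B "cdom X h" h] by (simp add: hom_iff)

lemma pair_ext: "ar u \<Longrightarrow> ar v \<Longrightarrow> ccod X u = cprod X A B \<Longrightarrow> ccod X v = cprod X A B \<Longrightarrow> A \<in> Ob \<Longrightarrow> B \<in> Ob \<Longrightarrow>
   ccomp X u (cpi0 X A B) = ccomp X v (cpi0 X A B) \<Longrightarrow> ccomp X u (cpi1 X A B) = ccomp X v (cpi1 X A B) \<Longrightarrow> u = v"
  by (metis pair_eta)

lemma proj_add: "A \<in> Ob \<Longrightarrow> B \<in> Ob \<Longrightarrow> ar f \<Longrightarrow> ar g \<Longrightarrow> cdom X f = cdom X g \<Longrightarrow> ccod X f = cprod X A B \<Longrightarrow> ccod X g = cprod X A B \<Longrightarrow>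
   ccomp X (cadd X f g) (cpi0 X A B) = cadd X (ccomp X f (cpi0 X A B)) (ccomp X g (cpi0 X A B))
 \<and> ccomp X (cadd X f g) (cpi1 X A B) = cadd X (ccomp X f (cpi1 X A B)) (ccomp X g (cpi1 X A B))"
  using ax15[rule_format, of A B "cdom X f" f g] by (simp add: hom_iff)

lemma proj_zero: "A \<in> Ob \<Longrightarrow> B \<in> Ob \<Longrightarrow> C \<in> Ob \<Longrightarrow>
   ccomp X (czero X C (cprod X A B)) (cpi0 X A B) = czero X C A
 \<and> ccomp X (czero X C (cprod X A B)) (cpi1 X A B) = czero X C B"
  using ax16[rule_format, of A B C] by simp

end

context CL
begin

lemma comp_pair[simp]: "ar h \<Longrightarrow> ar f \<Longrightarrow> ar g \<Longrightarrow> ccod X h = cdom X f \<Longrightarrow> cdom X f = cdom X g \<Longrightarrow>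
  ccomp X h (cpair X f g) = cpair X (ccomp X h f) (ccomp X h g)"
  by (rule pair_ext[of _ _ "ccod X f" "ccod X g"]) auto

lemma pair_add: "ar a \<Longrightarrow> ar b \<Longrightarrow> ar c \<Longrightarrow> ar d \<Longrightarrow> cdom X a = cdom X b \<Longrightarrow> cdom X c = cdom X a \<Longrightarrow>
   cdom X d = cdom X a \<Longrightarrow> ccod X c = ccod X a \<Longrightarrow> ccod X d = ccod X b \<Longrightarrow>
   cadd X (cpair X a b) (cpair X c d) = cpair X (cadd X a c) (cadd X b d)"
  by (rule pair_ext[of _ _ "ccod X a" "ccod X b"]) (auto simp: proj_add)

lemma zero_prod: "A \<in> Ob \<Longrightarrow> B \<in> Ob \<Longrightarrow> C \<in> Ob \<Longrightarrow>
   czero X C (cprod X A B) = cpair X (czero X C A) (czero X C B)"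
  by (rule pair_ext[of _ _ A B]) (auto simp: proj_zero)

lemma pair_zero_zero[simp]: "A \<in> Ob \<Longrightarrow> B \<in> Ob \<Longrightarrow> C \<in> Ob \<Longrightarrow>
   cpair X (czero X C A) (czero X C B) = czero X C (cprod X A B)"
  by (simp add: zero_prod)

lemma pair_proj[simp]: "A \<in> Ob \<Longrightarrow> B \<in> Ob \<Longrightarrow> cpair X (cpi0 X A B) (cpi1 X A B) = cid X (cprod X A B)"
  by (rule pair_ext[of _ _ A B]) auto

lemma pair_comp_proj[simp]: "ar h \<Longrightarrow> ccod X h = cprod X A B \<Longrightarrow> A \<in> Ob \<Longrightarrow> B \<in> Ob \<Longrightarrow>
   cpair X (ccomp X h (cpi0 X A B)) (ccomp X h (cpi1 X A B)) = h"
  using pair_eta by metis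

definition additive :: "'a \<Rightarrow> bool" where
  "additive k \<longleftrightarrow> ar k \<and>
     (\<forall>f g. ar f \<longrightarrow> ar g \<longrightarrow> cdom X f = cdom X g \<longrightarrow> ccod X f = cdom X k \<longrightarrow> ccod X g = cdom X k \<longrightarrow>
        ccomp X (cadd X f g) k = cadd X (ccomp X f k) (ccomp X g k))
   \<and> (\<forall>C\<in>Ob. ccomp X (czero X C (cdom X k)) k = czero X C (ccod X k))"

lemma additive_ar: "additive k \<Longrightarrow> ar k"
  unfolding additive_def by blast

lemma add_comp[simp]: "additive k \<Longrightarrow> ar f \<Longrightarrow> ar g \<Longrightarrow> cdom X f = cdom X g \<Longrightarrow> ccod X f = cdom X k \<Longrightarrow> ccod X g = cdom X k \<Longrightarrow>
        ccomp X (cadd X f g) k = cadd X (ccomp X f k) (ccomp X g k)"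
  unfolding additive_def by blast

lemma zero_comp[simp]: "additive k \<Longrightarrow> C \<in> Ob \<Longrightarrow> cdom X k = B \<Longrightarrow> ccomp X (czero X C B) k = czero X C (ccod X k)"
  unfolding additive_def by blast

lemma add_comp'[simp]: "additive k \<Longrightarrow> ar f \<Longrightarrow> ar g \<Longrightarrow> ar h \<Longrightarrow> cdom X f = cdom X g \<Longrightarrow> ccod X f = cdom X k \<Longrightarrow> ccod X g = cdom X k \<Longrightarrow>
        ccod X k = cdom X h \<Longrightarrow>
        ccomp X (cadd X f g) (ccomp X k h) = ccomp X (cadd X (ccomp X f k) (ccomp X g k)) h"
  by (subst assoc[symmetric]) (auto simp: additive_ar)

lemma zero_comp'[simp]: "additive k \<Longrightarrow> C \<in> Ob \<Longrightarrow> cdom X k = B \<Longrightarrow> ar h \<Longrightarrow> ccod X k = cdom X h \<Longrightarrow>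
   ccomp X (czero X C B) (ccomp X k h) = ccomp X (czero X C (ccod X k)) h"
  by (subst assoc[symmetric]) (auto simp: additive_ar)

lemma additiveI:
  assumes "ar k"
    and "\<And>f g. ar f \<Longrightarrow> ar g \<Longrightarrow> cdom X f = cdom X g \<Longrightarrow> ccod X f = cdom X k \<Longrightarrow> ccod X g = cdom X k \<Longrightarrow>
        ccomp X (cadd X f g) k = cadd X (ccomp X f k) (ccomp X g k)"
    and "\<And>C. C \<in> Ob \<Longrightarrow> ccomp X (czero X C (cdom X k)) k = czero X C (ccod X k)"
  shows "additive k"
  using assms unfolding additive_def by blast

lemma additive_pi0[simp]: "A \<in> Ob \<Longrightarrow> B \<in> Ob \<Longrightarrow> additive (cpi0 X A B)"
  by (rule additiveI) (auto simp: proj_add proj_zero)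

lemma additive_pi1[simp]: "A \<in> Ob \<Longrightarrow> B \<in> Ob \<Longrightarrow> additive (cpi1 X A B)"
  by (rule additiveI) (auto simp: proj_add proj_zero)

lemma additive_id[simp]: "A \<in> Ob \<Longrightarrow> additive (cid X A)"
  by (rule additiveI) auto

lemma additive_comp[simp]: "additive k \<Longrightarrow> additive h \<Longrightarrow> ccod X k = cdom X h \<Longrightarrow> additive (ccomp X k h)"
  by (rule additiveI) (auto simp: additive_ar)

lemma additive_zero[simp]: "A \<in> Ob \<Longrightarrow> B \<in> Ob \<Longrightarrow> additive (czero X A B)"
  by (rule additiveI) auto

lemma additive_pair[simp]: "additive a \<Longrightarrow> additive b \<Longrightarrow> cdom X a = cdom X b \<Longrightarrow> additive (cpair X a b)"
proof (rule additiveI)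
  assume a: "additive a" "additive b" "cdom X a = cdom X b"
  note ar = additive_ar[OF a(1)] additive_ar[OF a(2)]
  show "ar (cpair X a b)" using a ar by simp
  fix f g assume f: "ar f" "ar g" "cdom X f = cdom X g" "ccod X f = cdom X (cpair X a b)" "ccod X g = cdom X (cpair X a b)"
  show "ccomp X (cadd X f g) (cpair X a b) = cadd X (ccomp X f (cpair X a b)) (ccomp X g (cpair X a b))"
    using a ar f by (simp add: pair_add)
next
  fix C assume "C \<in> Ob"
  assume a: "additive a" "additive b" "cdom X a = cdom X b"
  note ar = additive_ar[OF a(1)] additive_ar[OF a(2)]
  show "ccomp X (czero X C (cdom X (cpair X a b))) (cpair X a b) = czero X C (ccod X (cpair X a b))"
    using a ar \<open>C \<in> Ob\<close> by simp
qed

lemma additive_add[simp]: "additive a \<Longrightarrow> additive b \<Longrightarrow> cdom X a = cdom X b \<Longrightarrow> ccod X a = ccod X b \<Longrightarrow> additive (cadd X a b)"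
proof (rule additiveI)
  assume a: "additive a" "additive b" "cdom X a = cdom X b" "ccod X a = ccod X b"
  note ar = additive_ar[OF a(1)] additive_ar[OF a(2)]
  show "ar (cadd X a b)" using a ar by simp
  fix f g assume f: "ar f" "ar g" "cdom X f = cdom X g" "ccod X f = cdom X (cadd X a b)" "ccod X g = cdom X (cadd X a b)"
  have e: "cadd X (cadd X (ccomp X f a) (ccomp X g a)) (cadd X (ccomp X f b) (ccomp X g b))
     = cadd X (cadd X (ccomp X f a) (ccomp X f b)) (cadd X (ccomp X g a) (ccomp X g b))"
    using a ar f by (simp add: add_lcomm[of "ccomp X g a"])
  show "ccomp X (cadd X f g) (cadd X a b) = cadd X (ccomp X f (cadd X a b)) (ccomp X g (cadd X a b))"
    using a ar f e by simp
next
  fix C assume "C \<in> Ob"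
  assume a: "additive a" "additive b" "cdom X a = cdom X b" "ccod X a = ccod X b"
  note ar = additive_ar[OF a(1)] additive_ar[OF a(2)]
  show "ccomp X (czero X C (cdom X (cadd X a b))) (cadd X a b) = czero X C (ccod X (cadd X a b))"
    using a ar \<open>C \<in> Ob\<close> by simp
qed

lemma cross_ty: "ar h \<Longrightarrow> ar k \<Longrightarrow> ar (cross X h k) \<and> cdom X (cross X h k) = cprod X (cdom X h) (cdom X k)
  \<and> ccod X (cross X h k) = cprod X (ccod X h) (ccod X k)"
  unfolding cross_def by simp

lemma cross_ar[simp]: "ar h \<Longrightarrow> ar k \<Longrightarrow> ar (cross X h k)"
  and cross_dom[simp]: "ar h \<Longrightarrow> ar k \<Longrightarrow> cdom X (cross X h k) = cprod X (cdom X h) (cdom X k)"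
  and cross_cod[simp]: "ar h \<Longrightarrow> ar k \<Longrightarrow> ccod X (cross X h k) = cprod X (ccod X h) (ccod X k)"
  using cross_ty by auto

lemma cross_pi0[simp]: "ar h \<Longrightarrow> ar k \<Longrightarrow> ccod X h = A \<Longrightarrow> ccod X k = B \<Longrightarrow>
   ccomp X (cross X h k) (cpi0 X A B) = ccomp X (cpi0 X (cdom X h) (cdom X k)) h"
  and cross_pi1[simp]: "ar h \<Longrightarrow> ar k \<Longrightarrow> ccod X h = A \<Longrightarrow> ccod X k = B \<Longrightarrow>
   ccomp X (cross X h k) (cpi1 X A B) = ccomp X (cpi1 X (cdom X h) (cdom X k)) k"
  unfolding cross_def by auto

lemma cross_pi0'[simp]: "ar h \<Longrightarrow> ar k \<Longrightarrow> ccod X h = A \<Longrightarrow> ccod X k = B \<Longrightarrow> ar u \<Longrightarrow> cdom X u = A \<Longrightarrow>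
   ccomp X (cross X h k) (ccomp X (cpi0 X A B) u) = ccomp X (cpi0 X (cdom X h) (cdom X k)) (ccomp X h u)"
  and cross_pi1'[simp]: "ar h \<Longrightarrow> ar k \<Longrightarrow> ccod X h = A \<Longrightarrow> ccod X k = B \<Longrightarrow> ar u \<Longrightarrow> cdom X u = B \<Longrightarrow>
   ccomp X (cross X h k) (ccomp X (cpi1 X A B) u) = ccomp X (cpi1 X (cdom X h) (cdom X k)) (ccomp X k u)"
  unfolding cross_def by auto

lemma pair_cross[simp]: "ar f \<Longrightarrow> ar g \<Longrightarrow> ar h \<Longrightarrow> ar k \<Longrightarrow> cdom X f = cdom X g \<Longrightarrow> ccod X f = cdom X h \<Longrightarrow> ccod X g = cdom X k \<Longrightarrow>
   ccomp X (cpair X f g) (cross X h k) = cpair X (ccomp X f h) (ccomp X g k)"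
  unfolding cross_def by simp

lemma cross_cross[simp]: "ar a \<Longrightarrow> ar b \<Longrightarrow> ar c \<Longrightarrow> ar d \<Longrightarrow> ccod X a = cdom X c \<Longrightarrow> ccod X b = cdom X d \<Longrightarrow>
   ccomp X (cross X a b) (cross X c d) = cross X (ccomp X a c) (ccomp X b d)"
  unfolding cross_def[of X a b] by (simp add: cross_def)

lemma cross_cross'[simp]: "ar a \<Longrightarrow> ar b \<Longrightarrow> ar c \<Longrightarrow> ar d \<Longrightarrow> ar u \<Longrightarrow> ccod X a = cdom X c \<Longrightarrow> ccod X b = cdom X d \<Longrightarrow>
   cdom X u = cprod X (ccod X c) (ccod X d) \<Longrightarrow>
   ccomp X (cross X a b) (ccomp X (cross X c d) u) = ccomp X (cross X (ccomp X a c) (ccomp X b d)) u"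
  by (subst assoc[symmetric]) auto

lemma cross_id[simp]: "A \<in> Ob \<Longrightarrow> B \<in> Ob \<Longrightarrow> cross X (cid X A) (cid X B) = cid X (cprod X A B)"
  unfolding cross_def by simp

lemma cross_zero[simp]: "A \<in> Ob \<Longrightarrow> B \<in> Ob \<Longrightarrow> C \<in> Ob \<Longrightarrow> D \<in> Ob \<Longrightarrow>
   cross X (czero X A B) (czero X C D) = czero X (cprod X A C) (cprod X B D)"
  unfolding cross_def by simp

lemma additive_cross[simp]: "additive h \<Longrightarrow> additive k \<Longrightarrow> additive (cross X h k)"
  unfolding cross_def by (simp add: additive_ar)

end

context CL
begin

lemma Pobj_eq[simp]: "Pobj X A = cprod X A A"
  by (simp add: Pobj_def)

lemma Pn_0[simp]: "Pn X 0 A = A"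
  by (simp add: Pn_def)

lemma Pn_Suc[simp]: "Pn X (Suc n) A = cprod X (Pn X n A) (Pn X n A)"
  by (simp add: Pn_def)

lemma Pn_add[simp]: "Pn X m (Pn X n A) = Pn X (m + n) A"
  by (simp add: Pn_def funpow_add)

lemma Pn_prod[simp]: "Pn X n (cprod X A A) = cprod X (Pn X n A) (Pn X n A)"
proof -
  have "Pn X n (cprod X A A) = Pn X n (Pn X 1 A)" by simp
  also have "\<dots> = Pn X (Suc n) A" by (simp only: Pn_add) simp
  finally show ?thesis by simp
qed

lemma Pn_ob[simp]: "A \<in> Ob \<Longrightarrow> Pn X n A \<in> Ob"
  by (induct n) auto

lemma Pnarr_0[simp]: "Pnarr X 0 h = h"
  by (simp add: Pnarr_def)

lemma Pnarr_Suc[simp]: "Pnarr X (Suc n) h = cross X (Pnarr X n h) (Pnarr X n h)"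
  by (simp add: Pnarr_def Parr_def)

lemma Parr_eq[simp]: "Parr X h = cross X h h"
  by (simp add: Parr_def)

lemma Pnarr_add[simp]: "Pnarr X m (Pnarr X n h) = Pnarr X (m + n) h"
  by (simp add: Pnarr_def funpow_add)

lemma Pnarr_cross[simp]: "Pnarr X n (cross X h h) = cross X (Pnarr X n h) (Pnarr X n h)"
proof -
  have "Pnarr X n (cross X h h) = Pnarr X n (Pnarr X 1 h)" by simp
  also have "\<dots> = Pnarr X (Suc n) h" by (simp only: Pnarr_add) simp
  finally show ?thesis by simp
qed

lemma Pnarr_ty: "ar h \<Longrightarrow> ar (Pnarr X n h) \<and> cdom X (Pnarr X n h) = Pn X n (cdom X h) \<and> ccod X (Pnarr X n h) = Pn X n (ccod X h)"
  by (induct n) auto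

lemma Pnarr_ar[simp]: "ar h \<Longrightarrow> ar (Pnarr X n h)"
  and Pnarr_dom[simp]: "ar h \<Longrightarrow> cdom X (Pnarr X n h) = Pn X n (cdom X h)"
  and Pnarr_cod[simp]: "ar h \<Longrightarrow> ccod X (Pnarr X n h) = Pn X n (ccod X h)"
  using Pnarr_ty by auto

lemma Pnarr_comp[simp]: "ar h \<Longrightarrow> ar k \<Longrightarrow> ccod X h = cdom X k \<Longrightarrow>
   Pnarr X n (ccomp X h k) = ccomp X (Pnarr X n h) (Pnarr X n k)"
  by (induct n) auto

lemma Pnarr_comp': "ar h \<Longrightarrow> ar k \<Longrightarrow> ar u \<Longrightarrow> ccod X h = cdom X k \<Longrightarrow> cdom X u = Pn X n (ccod X k) \<Longrightarrow>
   ccomp X (Pnarr X n h) (ccomp X (Pnarr X n k) u) = ccomp X (Pnarr X n (ccomp X h k)) u"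
  by (subst assoc[symmetric]) auto

lemma Pnarr_id[simp]: "A \<in> Ob \<Longrightarrow> Pnarr X n (cid X A) = cid X (Pn X n A)"
  by (induct n) auto

lemma Pnarr_zero[simp]: "A \<in> Ob \<Longrightarrow> B \<in> Ob \<Longrightarrow> Pnarr X n (czero X A B) = czero X (Pn X n A) (Pn X n B)"
  by (induct n) auto

lemma additive_Pnarr[simp]: "additive h \<Longrightarrow> additive (Pnarr X n h)"
  by (induct n) auto

lemma iseq_ty: "A \<in> Ob \<Longrightarrow> ar (iseq X A n) \<and> cdom X (iseq X A n) = Pn X n A \<and> ccod X (iseq X A n) = A"
  by (induct n) auto

lemma iseq_ar[simp]: "A \<in> Ob \<Longrightarrow> ar (iseq X A n)"
  and iseq_dom[simp]: "A \<in> Ob \<Longrightarrow> cdom X (iseq X A n) = Pn X n A"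
  and iseq_cod[simp]: "A \<in> Ob \<Longrightarrow> ccod X (iseq X A n) = A"
  using iseq_ty by auto

lemma additive_iseq[simp]: "A \<in> Ob \<Longrightarrow> additive (iseq X A n)"
  by (induct n) auto

lemma iseq_nat: "ar h \<Longrightarrow> ccomp X (Pnarr X n h) (iseq X (ccod X h) n) = ccomp X (iseq X (cdom X h) n) h"
proof (induct n)
  case 0 then show ?case by simp
next
  case (Suc n)
  have "ccomp X (Pnarr X (Suc n) h) (iseq X (ccod X h) (Suc n))
      = ccomp X (cpi1 X (Pn X n (cdom X h)) (Pn X n (cdom X h))) (ccomp X (Pnarr X n h) (iseq X (ccod X h) n))"
    using Suc by simp
  also have "\<dots> = ccomp X (cpi1 X (Pn X n (cdom X h)) (Pn X n (cdom X h))) (ccomp X (iseq X (cdom X h) n) h)"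
    using Suc by simp
  also have "\<dots> = ccomp X (iseq X (cdom X h) (Suc n)) h" using Suc by simp
  finally show ?case .
qed

lemma iseq_nat'[simp]: "ar h \<Longrightarrow> ccod X h = B \<Longrightarrow> ccomp X (Pnarr X n h) (iseq X B n) = ccomp X (iseq X (cdom X h) n) h"
  using iseq_nat by blast

lemma iseq_split: "A \<in> Ob \<Longrightarrow> iseq X A (j + m) = ccomp X (iseq X (Pn X m A) j) (iseq X A m)"
proof (induct j)
  case 0 then show ?case by simp
next
  case (Suc j)
  then show ?case by simp
qed

end

definition spair :: "('o, 'a) clac \<Rightarrow> (nat \<Rightarrow> 'a) \<Rightarrow> (nat \<Rightarrow> 'a) \<Rightarrow> nat \<Rightarrow> 'a" where
  "spair X f g = (\<lambda>n. cpair X (f n) (g n))"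

context CL
begin

abbreviation "ps f \<equiv> pre_dseq X f"

lemma psI: "(\<And>n. ar (f n) \<and> cdom X (f n) = Pn X n (sdom X f) \<and> ccod X (f n) = scod X f) \<Longrightarrow> ps f"
  unfolding pre_dseq_def hom_def by auto

lemma psI2: "(\<And>n. ar (f n)) \<Longrightarrow> (\<And>n. cdom X (f n) = Pn X n A) \<Longrightarrow> (\<And>n. ccod X (f n) = B) \<Longrightarrow> ps f"
  unfolding pre_dseq_def hom_def sdom_def scod_def by (metis (mono_tags, lifting) Pn_0 mem_Collect_eq)

lemma ps_ar[simp]: "ps f \<Longrightarrow> ar (f n)"
  and ps_dom[simp]: "ps f \<Longrightarrow> cdom X (f n) = Pn X n (sdom X f)"
  and ps_cod[simp]: "ps f \<Longrightarrow> ccod X (f n) = scod X f"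
  unfolding pre_dseq_def hom_def by auto

lemma sdom_ob[simp]: "ps f \<Longrightarrow> sdom X f \<in> Ob"
  and scod_ob[simp]: "ps f \<Longrightarrow> scod X f \<in> Ob"
  using ps_ar[of f 0] ps_dom[of f 0] ps_cod[of f 0] by (metis Pn_0 dom_ob, metis cod_ob)

lemma ps_eqI: "ps f \<Longrightarrow> sdom X f = A \<Longrightarrow> scod X f = B \<Longrightarrow> ar (f n) \<and> cdom X (f n) = Pn X n A \<and> ccod X (f n) = B"
  by simp

lemma Dseq_app: "Dseq f n = f (Suc n)"
  by (simp add: Dseq_def)

lemma Dpow_app: "(Dseq ^^ k) f n = f (n + k)"
  by (induct k arbitrary: n) (auto simp: Dseq_def)

lemma lact_app: "lact X h f n = ccomp X (Pnarr X n h) (f n)"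
  by (simp add: lact_def)

lemma ract_app: "ract X f k n = ccomp X (f n) k"
  by (simp add: ract_def)

lemma sadd_app: "sadd X f g n = cadd X (f n) (g n)"
  by (simp add: sadd_def)

lemma szero_app: "szero X A B n = czero X (Pn X n A) B"
  by (simp add: szero_def)

lemma spair_app: "spair X f g n = cpair X (f n) (g n)"
  by (simp add: spair_def)

lemma tan_app: "tan X f n = cpair X (ccomp X (Pnarr X n (cpi0 X (sdom X f) (sdom X f))) (f n)) (f (Suc n))"
  by (simp add: tan_def)

lemma scomp_app: "scomp X f g n = ccomp X ((tan X ^^ n) f 0) (g n)"
  by (simp add: scomp_def)

lemmas app_simps = Dseq_app Dpow_app lact_app ract_app sadd_app szero_app spair_app tan_app scomp_app

lemma ps_Dseq[simp]: "ps f \<Longrightarrow> ps (Dseq f)"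
  and sdom_Dseq[simp]: "ps f \<Longrightarrow> sdom X (Dseq f) = cprod X (sdom X f) (sdom X f)"
  and scod_Dseq[simp]: "ps f \<Longrightarrow> scod X (Dseq f) = scod X f"
proof -
  assume f: "ps f"
  show s: "sdom X (Dseq f) = cprod X (sdom X f) (sdom X f)" using f by (subst (1) sdom_def) (simp add: app_simps)
  show c: "scod X (Dseq f) = scod X f" using f by (subst (1) scod_def) (simp add: app_simps)
  show "ps (Dseq f)" by (rule psI2[where A="cprod X (sdom X f) (sdom X f)" and B="scod X f"]) (use f in \<open>simp_all add: app_simps\<close>)
qed

lemma ps_Dpow[simp]: "ps f \<Longrightarrow> ps ((Dseq ^^ k) f)"
  and sdom_Dpow[simp]: "ps f \<Longrightarrow> sdom X ((Dseq ^^ k) f) = Pn X k (sdom X f)"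
  and scod_Dpow[simp]: "ps f \<Longrightarrow> scod X ((Dseq ^^ k) f) = scod X f"
proof -
  assume f: "ps f"
  show s: "sdom X ((Dseq ^^ k) f) = Pn X k (sdom X f)" using f by (subst (1) sdom_def) (simp add: app_simps)
  show c: "scod X ((Dseq ^^ k) f) = scod X f" using f by (subst (1) scod_def) (simp add: app_simps)
  show "ps ((Dseq ^^ k) f)" by (rule psI2[where A="Pn X k (sdom X f)" and B="scod X f"]) (use f in \<open>simp_all add: app_simps\<close>)
qed

lemma ps_lact[simp]: "ps f \<Longrightarrow> ar h \<Longrightarrow> ccod X h = sdom X f \<Longrightarrow> ps (lact X h f)"
  and sdom_lact[simp]: "ps f \<Longrightarrow> ar h \<Longrightarrow> ccod X h = sdom X f \<Longrightarrow> sdom X (lact X h f) = cdom X h"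
  and scod_lact[simp]: "ps f \<Longrightarrow> ar h \<Longrightarrow> ccod X h = sdom X f \<Longrightarrow> scod X (lact X h f) = scod X f"
proof -
  assume f: "ps f" "ar h" "ccod X h = sdom X f"
  show s: "sdom X (lact X h f) = cdom X h" using f by (subst (1) sdom_def) (simp add: app_simps)
  show c: "scod X (lact X h f) = scod X f" using f by (subst (1) scod_def) (simp add: app_simps)
  show "ps (lact X h f)" by (rule psI2[where A="cdom X h" and B="scod X f"]) (use f in \<open>simp_all add: app_simps\<close>)
qed

lemma ps_ract[simp]: "ps f \<Longrightarrow> ar k \<Longrightarrow> cdom X k = scod X f \<Longrightarrow> ps (ract X f k)"
  and sdom_ract[simp]: "ps f \<Longrightarrow> ar k \<Longrightarrow> cdom X k = scod X f \<Longrightarrow> sdom X (ract X f k) = sdom X f"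
  and scod_ract[simp]: "ps f \<Longrightarrow> ar k \<Longrightarrow> cdom X k = scod X f \<Longrightarrow> scod X (ract X f k) = ccod X k"
proof -
  assume f: "ps f" "ar k" "cdom X k = scod X f"
  show s: "sdom X (ract X f k) = sdom X f" using f by (subst (1) sdom_def) (simp add: app_simps)
  show c: "scod X (ract X f k) = ccod X k" using f by (subst (1) scod_def) (simp add: app_simps)
  show "ps (ract X f k)" by (rule psI2[where A="sdom X f" and B="ccod X k"]) (use f in \<open>simp_all add: app_simps\<close>)
qed

lemma ps_sadd[simp]: "ps f \<Longrightarrow> ps g \<Longrightarrow> sdom X f = sdom X g \<Longrightarrow> scod X f = scod X g \<Longrightarrow> ps (sadd X f g)"
  and sdom_sadd[simp]: "ps f \<Longrightarrow> ps g \<Longrightarrow> sdom X f = sdom X g \<Longrightarrow> scod X f = scod X g \<Longrightarrow> sdom X (sadd X f g) = sdom X f"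
  and scod_sadd[simp]: "ps f \<Longrightarrow> ps g \<Longrightarrow> sdom X f = sdom X g \<Longrightarrow> scod X f = scod X g \<Longrightarrow> scod X (sadd X f g) = scod X f"
proof -
  assume f: "ps f" "ps g" "sdom X f = sdom X g" "scod X f = scod X g"
  show s: "sdom X (sadd X f g) = sdom X f" using f by (subst (1) sdom_def) (simp add: app_simps)
  show c: "scod X (sadd X f g) = scod X f" using f by (subst (1) scod_def) (simp add: app_simps)
  show "ps (sadd X f g)" by (rule psI2[where A="sdom X f" and B="scod X f"]) (use f in \<open>simp_all add: app_simps\<close>)
qed

lemma ps_szero[simp]: "A \<in> Ob \<Longrightarrow> B \<in> Ob \<Longrightarrow> ps (szero X A B)"
  and sdom_szero[simp]: "A \<in> Ob \<Longrightarrow> B \<in> Ob \<Longrightarrow> sdom X (szero X A B) = A"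
  and scod_szero[simp]: "A \<in> Ob \<Longrightarrow> B \<in> Ob \<Longrightarrow> scod X (szero X A B) = B"
proof -
  assume f: "A \<in> Ob" "B \<in> Ob"
  show s: "sdom X (szero X A B) = A" using f by (subst (1) sdom_def) (simp add: app_simps)
  show c: "scod X (szero X A B) = B" using f by (subst (1) scod_def) (simp add: app_simps)
  show "ps (szero X A B)" by (rule psI2[where A="A" and B="B"]) (use f in \<open>simp_all add: app_simps\<close>)
qed

lemma ps_spair[simp]: "ps f \<Longrightarrow> ps g \<Longrightarrow> sdom X f = sdom X g \<Longrightarrow> ps (spair X f g)"
  and sdom_spair[simp]: "ps f \<Longrightarrow> ps g \<Longrightarrow> sdom X f = sdom X g \<Longrightarrow> sdom X (spair X f g) = sdom X f"
  and scod_spair[simp]: "ps f \<Longrightarrow> ps g \<Longrightarrow> sdom X f = sdom X g \<Longrightarrow> scod X (spair X f g) = cprod X (scod X f) (scod X g)"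
proof -
  assume f: "ps f" "ps g" "sdom X f = sdom X g"
  show s: "sdom X (spair X f g) = sdom X f" using f by (subst (1) sdom_def) (simp add: app_simps)
  show c: "scod X (spair X f g) = cprod X (scod X f) (scod X g)" using f by (subst (1) scod_def) (simp add: app_simps)
  show "ps (spair X f g)" by (rule psI2[where A="sdom X f" and B="cprod X (scod X f) (scod X g)"]) (use f in \<open>simp_all add: app_simps\<close>)
qed

lemma ps_iseq[simp]: "A \<in> Ob \<Longrightarrow> ps (iseq X A)"
  and sdom_iseq[simp]: "A \<in> Ob \<Longrightarrow> sdom X (iseq X A) = A"
  and scod_iseq[simp]: "A \<in> Ob \<Longrightarrow> scod X (iseq X A) = A"
proof -
  assume f: "A \<in> Ob"
  show s: "sdom X (iseq X A) = A" using f by (subst (1) sdom_def) (simp add: app_simps)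
  show c: "scod X (iseq X A) = A" using f by (subst (1) scod_def) (simp add: app_simps)
  show "ps (iseq X A)" by (rule psI2[where A="A" and B="A"]) (use f in \<open>simp_all add: app_simps\<close>)
qed

lemma ps_tan[simp]: "ps f \<Longrightarrow> ps (tan X f)"
  and sdom_tan[simp]: "ps f \<Longrightarrow> sdom X (tan X f) = cprod X (sdom X f) (sdom X f)"
  and scod_tan[simp]: "ps f \<Longrightarrow> scod X (tan X f) = cprod X (scod X f) (scod X f)"
proof -
  assume f: "ps f"
  show s: "sdom X (tan X f) = cprod X (sdom X f) (sdom X f)" using f by (subst (1) sdom_def) (simp add: app_simps)
  show c: "scod X (tan X f) = cprod X (scod X f) (scod X f)" using f by (subst (1) scod_def) (simp add: app_simps)
  show "ps (tan X f)" by (rule psI2[where A="cprod X (sdom X f) (sdom X f)" and B="cprod X (scod X f) (scod X f)"]) (use f in \<open>simp_all add: app_simps\<close>)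
qed

lemma ps_tanpow[simp]: "ps f \<Longrightarrow> ps ((tan X ^^ k) f)"
  and sdom_tanpow[simp]: "ps f \<Longrightarrow> sdom X ((tan X ^^ k) f) = Pn X k (sdom X f)"
  and scod_tanpow[simp]: "ps f \<Longrightarrow> scod X ((tan X ^^ k) f) = Pn X k (scod X f)"
  by (induct k) auto

lemma ps_scomp[simp]: "ps f \<Longrightarrow> ps g \<Longrightarrow> scod X f = sdom X g \<Longrightarrow> ps (scomp X f g)"
  and sdom_scomp[simp]: "ps f \<Longrightarrow> ps g \<Longrightarrow> scod X f = sdom X g \<Longrightarrow> sdom X (scomp X f g) = sdom X f"
  and scod_scomp[simp]: "ps f \<Longrightarrow> ps g \<Longrightarrow> scod X f = sdom X g \<Longrightarrow> scod X (scomp X f g) = scod X g"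
proof -
  assume f: "ps f" "ps g" "scod X f = sdom X g"
  show s: "sdom X (scomp X f g) = sdom X f" using f by (subst (1) sdom_def) (simp add: app_simps)
  show c: "scod X (scomp X f g) = scod X g" using f by (subst (1) scod_def) (simp add: app_simps)
  show "ps (scomp X f g)" by (rule psI2[where A="sdom X f" and B="scod X g"]) (use f in \<open>simp_all add: app_simps\<close>)
qed

end

context CL
begin

lemma lact_lact: "ps f \<Longrightarrow> ar h \<Longrightarrow> ar k \<Longrightarrow> ccod X h = cdom X k \<Longrightarrow> ccod X k = sdom X f \<Longrightarrow>
  lact X h (lact X k f) = lact X (ccomp X h k) f"
  by (rule ext) (simp add: app_simps app_simps)

lemma lact_id[simp]: "ps f \<Longrightarrow> A = sdom X f \<Longrightarrow> lact X (cid X A) f = f"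
  by (rule ext) (simp add: app_simps app_simps)

lemma lact_sadd: "ps f \<Longrightarrow> ps g \<Longrightarrow> sdom X f = sdom X g \<Longrightarrow> scod X f = scod X g \<Longrightarrow> ar h \<Longrightarrow> ccod X h = sdom X f \<Longrightarrow>
  lact X h (sadd X f g) = sadd X (lact X h f) (lact X h g)"
  by (rule ext) (simp add: app_simps app_simps)

lemma lact_szero[simp]: "A \<in> Ob \<Longrightarrow> B \<in> Ob \<Longrightarrow> ar h \<Longrightarrow> ccod X h = A \<Longrightarrow>
  lact X h (szero X A B) = szero X (cdom X h) B"
  by (rule ext) (simp add: app_simps app_simps)

lemma lact_spair: "ps f \<Longrightarrow> ps g \<Longrightarrow> sdom X f = sdom X g \<Longrightarrow> ar h \<Longrightarrow> ccod X h = sdom X f \<Longrightarrow>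
  lact X h (spair X f g) = spair X (lact X h f) (lact X h g)"
  by (rule ext) (simp add: app_simps app_simps)

lemma lact_ract: "ps f \<Longrightarrow> ar h \<Longrightarrow> ccod X h = sdom X f \<Longrightarrow> ar k \<Longrightarrow> cdom X k = scod X f \<Longrightarrow>
  lact X h (ract X f k) = ract X (lact X h f) k"
  by (rule ext) (simp add: app_simps app_simps)

lemma ract_ract: "ps f \<Longrightarrow> ar k \<Longrightarrow> ar k' \<Longrightarrow> cdom X k = scod X f \<Longrightarrow> ccod X k = cdom X k' \<Longrightarrow>
  ract X (ract X f k) k' = ract X f (ccomp X k k')"
  by (rule ext) (simp add: app_simps app_simps)

lemma ract_pair: "ps f \<Longrightarrow> ar a \<Longrightarrow> ar b \<Longrightarrow> cdom X a = scod X f \<Longrightarrow> cdom X b = scod X f \<Longrightarrow>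
  ract X f (cpair X a b) = spair X (ract X f a) (ract X f b)"
  by (rule ext) (simp add: app_simps app_simps)

lemma ract_spair_cross: "ps f \<Longrightarrow> ps g \<Longrightarrow> sdom X f = sdom X g \<Longrightarrow> ar h \<Longrightarrow> ar k \<Longrightarrow> cdom X h = scod X f \<Longrightarrow> cdom X k = scod X g \<Longrightarrow>
  ract X (spair X f g) (cross X h k) = spair X (ract X f h) (ract X g k)"
  by (rule ext) (simp add: app_simps app_simps)

lemma ract_spair_pi0[simp]: "ps f \<Longrightarrow> ps g \<Longrightarrow> sdom X f = sdom X g \<Longrightarrow> A = scod X f \<Longrightarrow> B = scod X g \<Longrightarrow>
  ract X (spair X f g) (cpi0 X A B) = f"
  and ract_spair_pi1[simp]: "ps f \<Longrightarrow> ps g \<Longrightarrow> sdom X f = sdom X g \<Longrightarrow> A = scod X f \<Longrightarrow> B = scod X g \<Longrightarrow>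
  ract X (spair X f g) (cpi1 X A B) = g"
  by (rule ext, simp add: app_simps)+

lemma ract_id[simp]: "ps f \<Longrightarrow> B = scod X f \<Longrightarrow> ract X f (cid X B) = f"
  by (rule ext) (simp add: app_simps app_simps)

lemma ract_sadd: "ps f \<Longrightarrow> ar a \<Longrightarrow> ar b \<Longrightarrow> cdom X a = scod X f \<Longrightarrow> cdom X b = scod X f \<Longrightarrow> ccod X a = ccod X b \<Longrightarrow>
  ract X f (cadd X a b) = sadd X (ract X f a) (ract X f b)"
  by (rule ext) (simp add: app_simps app_simps)

lemma ract_zero: "ps f \<Longrightarrow> C \<in> Ob \<Longrightarrow> B = scod X f \<Longrightarrow> ract X f (czero X B C) = szero X (sdom X f) C"
  by (rule ext) (simp add: app_simps app_simps)

lemma Dseq_lact: "ps f \<Longrightarrow> ar h \<Longrightarrow> ccod X h = sdom X f \<Longrightarrow> Dseq (lact X h f) = lact X (cross X h h) (Dseq f)"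
  by (rule ext) (simp add: app_simps app_simps)

lemma Dseq_ract: "Dseq (ract X f k) = ract X (Dseq f) k"
  by (rule ext) (simp add: app_simps app_simps)

lemma Dseq_sadd: "Dseq (sadd X f g) = sadd X (Dseq f) (Dseq g)"
  by (rule ext) (simp add: app_simps app_simps)

lemma Dseq_spair: "Dseq (spair X f g) = spair X (Dseq f) (Dseq g)"
  by (rule ext) (simp add: app_simps app_simps)

lemma Dseq_szero: "Dseq (szero X A B) = szero X (cprod X A A) B"
  by (rule ext) (simp add: app_simps app_simps)

lemma Dpow_lact: "ps f \<Longrightarrow> ar h \<Longrightarrow> ccod X h = sdom X f \<Longrightarrow> (Dseq ^^ m) (lact X h f) = lact X (Pnarr X m h) ((Dseq ^^ m) f)"
  by (rule ext) (simp add: app_simps app_simps)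

lemma Dpow_ract: "(Dseq ^^ m) (ract X f k) = ract X ((Dseq ^^ m) f) k"
  by (rule ext) (simp add: app_simps app_simps)

lemma Dpow_sadd: "(Dseq ^^ m) (sadd X f g) = sadd X ((Dseq ^^ m) f) ((Dseq ^^ m) g)"
  by (rule ext) (simp add: app_simps app_simps)

lemma Dpow_spair: "(Dseq ^^ m) (spair X f g) = spair X ((Dseq ^^ m) f) ((Dseq ^^ m) g)"
  by (rule ext) (simp add: app_simps app_simps)

lemma Dpow_szero: "(Dseq ^^ m) (szero X A B) = szero X (Pn X m A) B"
  by (rule ext) (simp add: app_simps app_simps)

lemma Dpow_Dpow: "(Dseq ^^ m) ((Dseq ^^ k) f) = (Dseq ^^ (m + k)) f"
  by (simp add: funpow_add)

lemma tan_spair: "ps f \<Longrightarrow> tan X f = spair X (lact X (cpi0 X (sdom X f) (sdom X f)) f) (Dseq f)"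
  by (rule ext) (simp add: app_simps app_simps)

lemma tan_ract: "ps f \<Longrightarrow> ar k \<Longrightarrow> cdom X k = scod X f \<Longrightarrow> tan X (ract X f k) = ract X (tan X f) (cross X k k)"
  by (rule ext) (simp add: app_simps app_simps)

lemma pi0_nat: "ar h \<Longrightarrow>
  ccomp X (Pnarr X n (cross X h h)) (Pnarr X n (cpi0 X (ccod X h) (ccod X h)))
  = ccomp X (Pnarr X n (cpi0 X (cdom X h) (cdom X h))) (Pnarr X n h)"
proof -
  assume h: "ar h"
  have "ccomp X (cross X h h) (cpi0 X (ccod X h) (ccod X h)) = ccomp X (cpi0 X (cdom X h) (cdom X h)) h"
    using h by simp
  hence "Pnarr X n (ccomp X (cross X h h) (cpi0 X (ccod X h) (ccod X h)))
       = Pnarr X n (ccomp X (cpi0 X (cdom X h) (cdom X h)) h)" by simp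
  moreover have "Pnarr X n (ccomp X (cross X h h) (cpi0 X (ccod X h) (ccod X h)))
     = ccomp X (Pnarr X n (cross X h h)) (Pnarr X n (cpi0 X (ccod X h) (ccod X h)))"
    by (rule Pnarr_comp) (use h in simp_all)
  moreover have "Pnarr X n (ccomp X (cpi0 X (cdom X h) (cdom X h)) h)
     = ccomp X (Pnarr X n (cpi0 X (cdom X h) (cdom X h))) (Pnarr X n h)"
    by (rule Pnarr_comp) (use h in simp_all)
  ultimately show ?thesis by simp
qed

lemma pi0_nat'[simp]: "ar h \<Longrightarrow> ar u \<Longrightarrow> cdom X u = Pn X n (ccod X h) \<Longrightarrow>
  ccomp X (cross X (Pnarr X n h) (Pnarr X n h)) (ccomp X (Pnarr X n (cpi0 X (ccod X h) (ccod X h))) u)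
  = ccomp X (Pnarr X n (cpi0 X (cdom X h) (cdom X h))) (ccomp X (Pnarr X n h) u)"
proof -
  assume h: "ar h" "ar u" "cdom X u = Pn X n (ccod X h)"
  have "ccomp X (cross X (Pnarr X n h) (Pnarr X n h)) (ccomp X (Pnarr X n (cpi0 X (ccod X h) (ccod X h))) u)
      = ccomp X (ccomp X (Pnarr X n (cross X h h)) (Pnarr X n (cpi0 X (ccod X h) (ccod X h)))) u"
    using h by simp
  also have "\<dots> = ccomp X (ccomp X (Pnarr X n (cpi0 X (cdom X h) (cdom X h))) (Pnarr X n h)) u"
    using h by (simp only: pi0_nat)
  also have "\<dots> = ccomp X (Pnarr X n (cpi0 X (cdom X h) (cdom X h))) (ccomp X (Pnarr X n h) u)"
    using h by simp
  finally show ?thesis .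
qed

lemma tan_lact: "ps f \<Longrightarrow> ar h \<Longrightarrow> ccod X h = sdom X f \<Longrightarrow> tan X (lact X h f) = lact X (cross X h h) (tan X f)"
proof (rule ext)
  fix n assume f: "ps f" "ar h" "ccod X h = sdom X f"
  have "ccomp X (cross X (Pnarr X n h) (Pnarr X n h)) (ccomp X (Pnarr X n (cpi0 X (sdom X f) (sdom X f))) (f n))
     = ccomp X (Pnarr X n (cpi0 X (cdom X h) (cdom X h))) (ccomp X (Pnarr X n h) (f n))"
    using pi0_nat'[of h "f n" n] f by simp
  thus "tan X (lact X h f) n = lact X (cross X h h) (tan X f) n"
    using f by (simp add: app_simps)
qed

lemma tan_pi0: "ps f \<Longrightarrow> A = sdom X f \<Longrightarrow> B = scod X f \<Longrightarrow> ract X (tan X f) (cpi0 X B B) = lact X (cpi0 X A A) f"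
  by (rule ext) (simp add: app_simps app_simps)

lemma tanpow_ract: "ps f \<Longrightarrow> ar k \<Longrightarrow> cdom X k = scod X f \<Longrightarrow>
   (tan X ^^ n) (ract X f k) = ract X ((tan X ^^ n) f) (Pnarr X n k)"
  by (induct n) (simp_all add: tan_ract)

lemma tanpow_lact: "ps f \<Longrightarrow> ar h \<Longrightarrow> ccod X h = sdom X f \<Longrightarrow>
   (tan X ^^ n) (lact X h f) = lact X (Pnarr X n h) ((tan X ^^ n) f)"
  by (induct n) (simp_all add: tan_lact)

lemma iseq_Suc': "A \<in> Ob \<Longrightarrow> ccomp X (cpi1 X (Pn X n A) (Pn X n A)) (iseq X A n) = ccomp X (iseq X (cprod X A A) n) (cpi1 X A A)"
proof -
  assume A: "A \<in> Ob"
  have "iseq X A (n + 1) = ccomp X (iseq X (Pn X 1 A) n) (iseq X A 1)"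
    using iseq_split A by blast
  thus ?thesis using A by simp
qed

lemma tan_iseq: "A \<in> Ob \<Longrightarrow> tan X (iseq X A) = iseq X (cprod X A A)"
proof (rule ext)
  fix n assume A: "A \<in> Ob"
  show "tan X (iseq X A) n = iseq X (cprod X A A) n"
    using A by (simp add: iseq_Suc' app_simps)
qed

lemma tanpow_iseq: "A \<in> Ob \<Longrightarrow> (tan X ^^ n) (iseq X A) = iseq X (Pn X n A)"
  by (induct n) (simp_all add: tan_iseq)

lemma tanpow_iseq0[simp]: "A \<in> Ob \<Longrightarrow> (tan X ^^ n) (iseq X A) 0 = cid X (Pn X n A)"
  by (simp add: tanpow_iseq)

lemma tanpow_iseq_right: "ps f \<Longrightarrow> B = scod X f \<Longrightarrow> ccomp X ((tan X ^^ n) f 0) (iseq X B n) = f n"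
proof (induct n arbitrary: f B)
  case 0 then show ?case by simp
next
  case (Suc n)
  have e: "iseq X B (Suc n) = ccomp X (iseq X (cprod X B B) n) (cpi1 X B B)" using Suc iseq_Suc'[of B n] by simp
  have ih: "ccomp X ((tan X ^^ n) (tan X f) 0) (iseq X (cprod X B B) n) = tan X f n"
    using Suc.hyps[of "tan X f" "cprod X B B"] Suc.prems by (simp del: tan_app)
  have "ccomp X ((tan X ^^ Suc n) f 0) (iseq X B (Suc n))
      = ccomp X (ccomp X ((tan X ^^ n) (tan X f) 0) (iseq X (cprod X B B) n)) (cpi1 X B B)"
    unfolding e funpow_Suc_right o_def using Suc by (simp del: iseq.simps)
  also have "\<dots> = f (Suc n)" using ih Suc by (simp add: app_simps)
  finally show ?case .
qed

lemma scomp_iseq_right[simp]: "ps f \<Longrightarrow> B = scod X f \<Longrightarrow> scomp X f (iseq X B) = f"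
  by (rule ext) (simp add: app_simps tanpow_iseq_right)

lemma scomp_lift_right: "ps f \<Longrightarrow> B = scod X f \<Longrightarrow> ar k \<Longrightarrow> cdom X k = B \<Longrightarrow> scomp X f (ract X (iseq X B) k) = ract X f k"
proof (rule ext)
  fix n assume f: "ps f" "B = scod X f" "ar k" "cdom X k = B"
  have "ccomp X ((tan X ^^ n) f 0) (ccomp X (iseq X B n) k) = ccomp X (ccomp X ((tan X ^^ n) f 0) (iseq X B n)) k"
    using f by simp
  thus "scomp X f (ract X (iseq X B) k) n = ract X f k n"
    using f by (simp add: tanpow_iseq_right app_simps)
qed

lemma scomp_iseq_left[simp]: "ps g \<Longrightarrow> A = sdom X g \<Longrightarrow> scomp X (iseq X A) g = g"
  by (rule ext) (simp add: app_simps app_simps)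

lemma scomp_lift_left: "ps g \<Longrightarrow> A \<in> Ob \<Longrightarrow> ar k \<Longrightarrow> cdom X k = A \<Longrightarrow> ccod X k = sdom X g \<Longrightarrow>
  scomp X (ract X (iseq X A) k) g = lact X k g"
  by (rule ext) (simp add: app_simps tanpow_ract)

lemma scomp_lact: "ps f \<Longrightarrow> ps g \<Longrightarrow> scod X f = sdom X g \<Longrightarrow> ar h \<Longrightarrow> ccod X h = sdom X f \<Longrightarrow>
  scomp X (lact X h f) g = lact X h (scomp X f g)"
  by (rule ext) (simp add: app_simps tanpow_lact)

lemma scomp_ract: "ps f \<Longrightarrow> ps g \<Longrightarrow> ar k \<Longrightarrow> cdom X k = scod X f \<Longrightarrow> ccod X k = sdom X g \<Longrightarrow>
  scomp X (ract X f k) g = scomp X f (lact X k g)"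
  by (rule ext) (simp add: app_simps tanpow_ract)

lemma scomp_sadd: "ps f \<Longrightarrow> ps g \<Longrightarrow> ps h \<Longrightarrow> scod X f = sdom X g \<Longrightarrow> sdom X h = sdom X g \<Longrightarrow> scod X h = scod X g \<Longrightarrow>
  scomp X f (sadd X g h) = sadd X (scomp X f g) (scomp X f h)"
  by (rule ext) (simp add: app_simps app_simps)

lemma scomp_szero: "ps f \<Longrightarrow> B = scod X f \<Longrightarrow> C \<in> Ob \<Longrightarrow> scomp X f (szero X B C) = szero X (sdom X f) C"
  by (rule ext) (simp add: app_simps app_simps)

lemma scomp_ract2: "ps f \<Longrightarrow> ps g \<Longrightarrow> scod X f = sdom X g \<Longrightarrow> ar k \<Longrightarrow> cdom X k = scod X g \<Longrightarrow>
  scomp X f (ract X g k) = ract X (scomp X f g) k"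
  by (rule ext) (simp add: app_simps app_simps)

lemma scomp_spair: "ps f \<Longrightarrow> ps g \<Longrightarrow> ps h \<Longrightarrow> scod X f = sdom X g \<Longrightarrow> sdom X h = sdom X g \<Longrightarrow>
  scomp X f (spair X g h) = spair X (scomp X f g) (scomp X f h)"
  by (rule ext) (simp add: app_simps app_simps)

lemma tan_scomp: "ps f \<Longrightarrow> ps g \<Longrightarrow> scod X f = sdom X g \<Longrightarrow> tan X (scomp X f g) = scomp X (tan X f) (tan X g)"
proof (rule ext)
  fix n assume f: "ps f" "ps g" "scod X f = sdom X g"
  let ?A = "sdom X f" and ?B = "sdom X g"
  have "(tan X ^^ n) (ract X (tan X f) (cpi0 X ?B ?B)) 0 = (tan X ^^ n) (lact X (cpi0 X ?A ?A) f) 0"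
    using tan_pi0[of f ?A ?B] f by simp
  hence key: "ccomp X ((tan X ^^ n) (tan X f) 0) (Pnarr X n (cpi0 X ?B ?B))
            = ccomp X (Pnarr X n (cpi0 X ?A ?A)) ((tan X ^^ n) f 0)"
    using f by (simp add: tanpow_ract tanpow_lact app_simps)
  have key': "ccomp X ((tan X ^^ n) (tan X f) 0) (ccomp X (Pnarr X n (cpi0 X ?B ?B)) (g n))
            = ccomp X (Pnarr X n (cpi0 X ?A ?A)) (ccomp X ((tan X ^^ n) f 0) (g n))"
  proof -
    have "ccomp X ((tan X ^^ n) (tan X f) 0) (ccomp X (Pnarr X n (cpi0 X ?B ?B)) (g n))
        = ccomp X (ccomp X ((tan X ^^ n) (tan X f) 0) (Pnarr X n (cpi0 X ?B ?B))) (g n)"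
      using f by simp
    also have "\<dots> = ccomp X (ccomp X (Pnarr X n (cpi0 X ?A ?A)) ((tan X ^^ n) f 0)) (g n)"
      by (simp only: key)
    also have "\<dots> = ccomp X (Pnarr X n (cpi0 X ?A ?A)) (ccomp X ((tan X ^^ n) f 0) (g n))"
      using f by simp
    finally show ?thesis .
  qed
  show "tan X (scomp X f g) n = scomp X (tan X f) (tan X g) n"
    using f key' by (simp add: funpow_swap1 app_simps)
qed

lemma tanpow_scomp: "ps f \<Longrightarrow> ps g \<Longrightarrow> scod X f = sdom X g \<Longrightarrow>
  (tan X ^^ n) (scomp X f g) = scomp X ((tan X ^^ n) f) ((tan X ^^ n) g)"
proof (induct n)
  case 0 then show ?case by simp
next
  case (Suc n)
  have "(tan X ^^ Suc n) (scomp X f g) = tan X ((tan X ^^ n) (scomp X f g))" by simp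
  also have "\<dots> = tan X (scomp X ((tan X ^^ n) f) ((tan X ^^ n) g))" using Suc by simp
  also have "\<dots> = scomp X (tan X ((tan X ^^ n) f)) (tan X ((tan X ^^ n) g))"
    by (rule tan_scomp) (use Suc in simp_all)
  also have "\<dots> = scomp X ((tan X ^^ Suc n) f) ((tan X ^^ Suc n) g)" by simp
  finally show ?case .
qed

lemma scomp_assoc: "ps f \<Longrightarrow> ps g \<Longrightarrow> ps h \<Longrightarrow> scod X f = sdom X g \<Longrightarrow> scod X g = sdom X h \<Longrightarrow>
  scomp X (scomp X f g) h = scomp X f (scomp X g h)"
  by (rule ext) (simp add: app_simps tanpow_scomp)

lemma Dseq_scomp: "Dseq (scomp X f g) = scomp X (tan X f) (Dseq g)"
  by (rule ext) (simp add: app_simps funpow_swap1 del: tan_app)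

lemma Dpow_scomp: "(Dseq ^^ m) (scomp X f g) = scomp X ((tan X ^^ m) f) ((Dseq ^^ m) g)"
proof (induct m)
  case 0 then show ?case by simp
next
  case (Suc m)
  have "(Dseq ^^ Suc m) (scomp X f g) = Dseq ((Dseq ^^ m) (scomp X f g))" by simp
  also have "\<dots> = scomp X (tan X ((tan X ^^ m) f)) (Dseq ((Dseq ^^ m) g))" by (simp only: Suc Dseq_scomp)
  also have "\<dots> = scomp X ((tan X ^^ Suc m) f) ((Dseq ^^ Suc m) g)" by simp
  finally show ?case .
qed

end

context CL
begin

definition conds :: "'o \<Rightarrow> 'o \<Rightarrow> (nat \<Rightarrow> 'a) \<Rightarrow> (nat \<Rightarrow> 'a) \<Rightarrow> bool" where
  "conds A B F1 F2 \<longleftrightarrow>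
     lact X (cpair X (cid X A) (czero X A A)) F1 = szero X A B
   \<and> lact X (cross X (cid X A) (cadd X (cpi0 X A A) (cpi1 X A A))) F1
       = sadd X (lact X (cross X (cid X A) (cpi0 X A A)) F1) (lact X (cross X (cid X A) (cpi1 X A A)) F1)
   \<and> lact X (cross X (cpair X (cid X A) (czero X A A)) (cpair X (czero X A A) (cid X A))) F2 = F1
   \<and> lact X (cpair X (cross X (cpi0 X A A) (cpi0 X A A)) (cross X (cpi1 X A A) (cpi1 X A A))) F2 = F2"

definition cond0 :: "(nat \<Rightarrow> 'a) \<Rightarrow> bool" where
  "cond0 g \<longleftrightarrow> conds (sdom X g) (scod X g) (Dseq g) (Dseq (Dseq g))"

lemma dseq_iff: "dseq X f \<longleftrightarrow> ps f \<and> (\<forall>n. cond0 ((Dseq ^^ n) f))"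
proof -
  have "\<And>n. ps f \<Longrightarrow> cond0 ((Dseq ^^ n) f) = conds (Pn X n (sdom X f)) (scod X f) ((Dseq ^^ (n + 1)) f) ((Dseq ^^ (n + 2)) f)"
    unfolding cond0_def by (simp add: numeral_2_eq_2)
  thus ?thesis unfolding dseq_def conds_def Let_def by auto
qed

lemma dseqI: "ps f \<Longrightarrow> (\<And>n. cond0 ((Dseq ^^ n) f)) \<Longrightarrow> dseq X f"
  using dseq_iff by blast

lemma dseq_ps[simp]: "dseq X f \<Longrightarrow> ps f"
  using dseq_iff by blast

lemma dseq_cond0: "dseq X f \<Longrightarrow> cond0 ((Dseq ^^ n) f)"
  using dseq_iff by blast

lemma dseq_cond0': "dseq X f \<Longrightarrow> cond0 f"
  using dseq_cond0[of f 0] by simp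

lemma dseq_Dseq[simp]: "dseq X f \<Longrightarrow> dseq X (Dseq f)"
proof (rule dseqI)
  assume f: "dseq X f"
  show "ps (Dseq f)" using f by simp
  fix n show "cond0 ((Dseq ^^ n) (Dseq f))"
    using dseq_cond0[OF f, of "Suc n"] by (simp add: funpow_swap1)
qed

lemma dseq_Dpow[simp]: "dseq X f \<Longrightarrow> dseq X ((Dseq ^^ n) f)"
  by (induct n) auto

lemma cond0D:
  assumes "cond0 g"
  shows "lact X (cpair X (cid X (sdom X g)) (czero X (sdom X g) (sdom X g))) (Dseq g) = szero X (sdom X g) (scod X g)"
    and "lact X (cross X (cid X (sdom X g)) (cadd X (cpi0 X (sdom X g) (sdom X g)) (cpi1 X (sdom X g) (sdom X g)))) (Dseq g)
       = sadd X (lact X (cross X (cid X (sdom X g)) (cpi0 X (sdom X g) (sdom X g))) (Dseq g))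
                (lact X (cross X (cid X (sdom X g)) (cpi1 X (sdom X g) (sdom X g))) (Dseq g))"
    and "lact X (cross X (cpair X (cid X (sdom X g)) (czero X (sdom X g) (sdom X g))) (cpair X (czero X (sdom X g) (sdom X g)) (cid X (sdom X g)))) (Dseq (Dseq g)) = Dseq g"
    and "lact X (cpair X (cross X (cpi0 X (sdom X g) (sdom X g)) (cpi0 X (sdom X g) (sdom X g))) (cross X (cpi1 X (sdom X g) (sdom X g)) (cpi1 X (sdom X g) (sdom X g)))) (Dseq (Dseq g)) = Dseq (Dseq g)"
  using assms unfolding cond0_def conds_def by auto

lemma cond0I:
  assumes "lact X (cpair X (cid X (sdom X g)) (czero X (sdom X g) (sdom X g))) (Dseq g) = szero X (sdom X g) (scod X g)"
    and "lact X (cross X (cid X (sdom X g)) (cadd X (cpi0 X (sdom X g) (sdom X g)) (cpi1 X (sdom X g) (sdom X g)))) (Dseq g)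
       = sadd X (lact X (cross X (cid X (sdom X g)) (cpi0 X (sdom X g) (sdom X g))) (Dseq g))
                (lact X (cross X (cid X (sdom X g)) (cpi1 X (sdom X g) (sdom X g))) (Dseq g))"
    and "lact X (cross X (cpair X (cid X (sdom X g)) (czero X (sdom X g) (sdom X g))) (cpair X (czero X (sdom X g) (sdom X g)) (cid X (sdom X g)))) (Dseq (Dseq g)) = Dseq g"
    and "lact X (cpair X (cross X (cpi0 X (sdom X g) (sdom X g)) (cpi0 X (sdom X g) (sdom X g))) (cross X (cpi1 X (sdom X g) (sdom X g)) (cpi1 X (sdom X g) (sdom X g)))) (Dseq (Dseq g)) = Dseq (Dseq g)"
  shows "cond0 g"
  using assms unfolding cond0_def conds_def by auto

end

context CL
begin

lemma sadd_szero[simp]: "A \<in> Ob \<Longrightarrow> B \<in> Ob \<Longrightarrow> sadd X (szero X A B) (szero X A B) = szero X A B"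
  by (rule ext) (simp add: app_simps)

lemma sadd_interchange: "ps a \<Longrightarrow> ps b \<Longrightarrow> ps c \<Longrightarrow> ps d \<Longrightarrow> sdom X b = sdom X a \<Longrightarrow> sdom X c = sdom X a \<Longrightarrow> sdom X d = sdom X a
  \<Longrightarrow> scod X b = scod X a \<Longrightarrow> scod X c = scod X a \<Longrightarrow> scod X d = scod X a \<Longrightarrow>
  sadd X (sadd X a b) (sadd X c d) = sadd X (sadd X a c) (sadd X b d)"
  by (rule ext) (simp add: app_simps add_lcomm[of "b _" "c _"])

lemma cond0_sadd:
  assumes F: "cond0 F" and G: "cond0 G" and ps: "ps F" "ps G" and ty: "sdom X G = sdom X F" "scod X G = scod X F"
  shows "cond0 (sadd X F G)"
proof -
  note F' = cond0D[OF F] and G' = cond0D[OF G, unfolded ty]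
  let ?A = "sdom X F"
  show ?thesis
  proof (rule cond0I)
    show "lact X (cpair X (cid X (sdom X (sadd X F G))) (czero X (sdom X (sadd X F G)) (sdom X (sadd X F G)))) (Dseq (sadd X F G)) =
    szero X (sdom X (sadd X F G)) (scod X (sadd X F G))"
      using ps ty F'(1) G'(1) by (simp add: Dseq_sadd lact_sadd)
    show "lact X (cross X (cpair X (cid X (sdom X (sadd X F G))) (czero X (sdom X (sadd X F G)) (sdom X (sadd X F G)))) (cpair X (czero X (sdom X (sadd X F G)) (sdom X (sadd X F G))) (cid X (sdom X (sadd X F G))))) (Dseq (Dseq (sadd X F G))) =
    Dseq (sadd X F G)"
      using ps ty F'(3) G'(3) by (simp add: Dseq_sadd lact_sadd)
    show "lact X (cpair X (cross X (cpi0 X (sdom X (sadd X F G)) (sdom X (sadd X F G))) (cpi0 X (sdom X (sadd X F G)) (sdom X (sadd X F G)))) (cross X (cpi1 X (sdom X (sadd X F G)) (sdom X (sadd X F G))) (cpi1 X (sdom X (sadd X F G)) (sdom X (sadd X F G))))) (Dseq (Dseq (sadd X F G))) =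
    Dseq (Dseq (sadd X F G))"
      using ps ty F'(4) G'(4) by (simp add: Dseq_sadd lact_sadd)
    have "lact X (cross X (cid X ?A) (cadd X (cpi0 X ?A ?A) (cpi1 X ?A ?A))) (Dseq (sadd X F G))
      = sadd X (sadd X (lact X (cross X (cid X ?A) (cpi0 X ?A ?A)) (Dseq F)) (lact X (cross X (cid X ?A) (cpi1 X ?A ?A)) (Dseq F)))
               (sadd X (lact X (cross X (cid X ?A) (cpi0 X ?A ?A)) (Dseq G)) (lact X (cross X (cid X ?A) (cpi1 X ?A ?A)) (Dseq G)))"
      using ps ty F'(2) G'(2) by (simp add: Dseq_sadd lact_sadd)
    also have "\<dots> = sadd X (sadd X (lact X (cross X (cid X ?A) (cpi0 X ?A ?A)) (Dseq F)) (lact X (cross X (cid X ?A) (cpi0 X ?A ?A)) (Dseq G)))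
               (sadd X (lact X (cross X (cid X ?A) (cpi1 X ?A ?A)) (Dseq F)) (lact X (cross X (cid X ?A) (cpi1 X ?A ?A)) (Dseq G)))"
      by (rule sadd_interchange) (use ps ty in simp_all)
    also have "\<dots> = sadd X (lact X (cross X (cid X ?A) (cpi0 X ?A ?A)) (Dseq (sadd X F G))) (lact X (cross X (cid X ?A) (cpi1 X ?A ?A)) (Dseq (sadd X F G)))"
      using ps ty by (simp add: Dseq_sadd lact_sadd)
    finally show "lact X (cross X (cid X (sdom X (sadd X F G))) (cadd X (cpi0 X (sdom X (sadd X F G)) (sdom X (sadd X F G))) (cpi1 X (sdom X (sadd X F G)) (sdom X (sadd X F G))))) (Dseq (sadd X F G)) =
    sadd X (lact X (cross X (cid X (sdom X (sadd X F G))) (cpi0 X (sdom X (sadd X F G)) (sdom X (sadd X F G)))) (Dseq (sadd X F G)))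
     (lact X (cross X (cid X (sdom X (sadd X F G))) (cpi1 X (sdom X (sadd X F G)) (sdom X (sadd X F G)))) (Dseq (sadd X F G)))"
      using ps ty by simp
  qed
qed

lemma dseq_sadd[simp]: "dseq X f \<Longrightarrow> dseq X g \<Longrightarrow> sdom X g = sdom X f \<Longrightarrow> scod X g = scod X f \<Longrightarrow> dseq X (sadd X f g)"
proof (rule dseqI)
  assume f: "dseq X f" "dseq X g" "sdom X g = sdom X f" "scod X g = scod X f"
  show "ps (sadd X f g)" using f by simp
  fix n show "cond0 ((Dseq ^^ n) (sadd X f g))"
    unfolding Dpow_sadd by (rule cond0_sadd) (use f dseq_cond0 in simp_all)
qed

lemma cond0_szero: "A \<in> Ob \<Longrightarrow> B \<in> Ob \<Longrightarrow> cond0 (szero X A B)"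
  by (rule cond0I) (simp_all add: Dseq_szero)

lemma dseq_szero[simp]: "A \<in> Ob \<Longrightarrow> B \<in> Ob \<Longrightarrow> dseq X (szero X A B)"
  by (rule dseqI) (simp_all add: Dpow_szero cond0_szero)

end

context CL
begin

lemma sadd_spair: "ps a \<Longrightarrow> ps b \<Longrightarrow> ps c \<Longrightarrow> ps d \<Longrightarrow> sdom X b = sdom X a \<Longrightarrow> sdom X c = sdom X a \<Longrightarrow> sdom X d = sdom X a
  \<Longrightarrow> scod X c = scod X a \<Longrightarrow> scod X d = scod X b \<Longrightarrow>
  sadd X (spair X a b) (spair X c d) = spair X (sadd X a c) (sadd X b d)"
  by (rule ext) (simp add: app_simps pair_add)

lemma spair_szero[simp]: "A \<in> Ob \<Longrightarrow> B \<in> Ob \<Longrightarrow> C \<in> Ob \<Longrightarrow> spair X (szero X A B) (szero X A C) = szero X A (cprod X B C)"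
  by (rule ext) (simp add: app_simps)

lemma cond0_spair:
  assumes F: "cond0 F" and G: "cond0 G" and ps: "ps F" "ps G" and ty: "sdom X G = sdom X F"
  shows "cond0 (spair X F G)"
proof -
  note F' = cond0D[OF F] and G' = cond0D[OF G, unfolded ty]
  let ?A = "sdom X F"
  show ?thesis
  proof (rule cond0I)
    show "lact X (cpair X (cid X (sdom X (spair X F G))) (czero X (sdom X (spair X F G)) (sdom X (spair X F G)))) (Dseq (spair X F G)) =
    szero X (sdom X (spair X F G)) (scod X (spair X F G))"
      using ps ty F'(1) G'(1) by (simp add: Dseq_spair lact_spair)
    show "lact X (cross X (cpair X (cid X (sdom X (spair X F G))) (czero X (sdom X (spair X F G)) (sdom X (spair X F G)))) (cpair X (czero X (sdom X (spair X F G)) (sdom X (spair X F G))) (cid X (sdom X (spair X F G))))) (Dseq (Dseq (spair X F G))) =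
    Dseq (spair X F G)"
      using ps ty F'(3) G'(3) by (simp add: Dseq_spair lact_spair)
    show "lact X (cpair X (cross X (cpi0 X (sdom X (spair X F G)) (sdom X (spair X F G))) (cpi0 X (sdom X (spair X F G)) (sdom X (spair X F G)))) (cross X (cpi1 X (sdom X (spair X F G)) (sdom X (spair X F G))) (cpi1 X (sdom X (spair X F G)) (sdom X (spair X F G))))) (Dseq (Dseq (spair X F G))) =
    Dseq (Dseq (spair X F G))"
      using ps ty F'(4) G'(4) by (simp add: Dseq_spair lact_spair)
    have "lact X (cross X (cid X ?A) (cadd X (cpi0 X ?A ?A) (cpi1 X ?A ?A))) (Dseq (spair X F G))
      = spair X (sadd X (lact X (cross X (cid X ?A) (cpi0 X ?A ?A)) (Dseq F)) (lact X (cross X (cid X ?A) (cpi1 X ?A ?A)) (Dseq F)))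
               (sadd X (lact X (cross X (cid X ?A) (cpi0 X ?A ?A)) (Dseq G)) (lact X (cross X (cid X ?A) (cpi1 X ?A ?A)) (Dseq G)))"
      using ps ty F'(2) G'(2) by (simp add: Dseq_spair lact_spair)
    also have "\<dots> = sadd X (spair X (lact X (cross X (cid X ?A) (cpi0 X ?A ?A)) (Dseq F)) (lact X (cross X (cid X ?A) (cpi0 X ?A ?A)) (Dseq G)))
               (spair X (lact X (cross X (cid X ?A) (cpi1 X ?A ?A)) (Dseq F)) (lact X (cross X (cid X ?A) (cpi1 X ?A ?A)) (Dseq G)))"
      by (rule sadd_spair[symmetric]) (use ps ty in simp_all)
    also have "\<dots> = sadd X (lact X (cross X (cid X ?A) (cpi0 X ?A ?A)) (Dseq (spair X F G))) (lact X (cross X (cid X ?A) (cpi1 X ?A ?A)) (Dseq (spair X F G)))"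
      using ps ty by (simp add: Dseq_spair lact_spair)
    finally show "lact X (cross X (cid X (sdom X (spair X F G))) (cadd X (cpi0 X (sdom X (spair X F G)) (sdom X (spair X F G))) (cpi1 X (sdom X (spair X F G)) (sdom X (spair X F G))))) (Dseq (spair X F G)) =
    sadd X (lact X (cross X (cid X (sdom X (spair X F G))) (cpi0 X (sdom X (spair X F G)) (sdom X (spair X F G)))) (Dseq (spair X F G)))
     (lact X (cross X (cid X (sdom X (spair X F G))) (cpi1 X (sdom X (spair X F G)) (sdom X (spair X F G)))) (Dseq (spair X F G)))"
      using ps ty by simp
  qed
qed

lemma dseq_spair[simp]: "dseq X f \<Longrightarrow> dseq X g \<Longrightarrow> sdom X g = sdom X f \<Longrightarrow> dseq X (spair X f g)"
proof (rule dseqI)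
  assume f: "dseq X f" "dseq X g" "sdom X g = sdom X f"
  show "ps (spair X f g)" using f by simp
  fix n show "cond0 ((Dseq ^^ n) (spair X f g))"
    unfolding Dpow_spair by (rule cond0_spair) (use f dseq_cond0 in simp_all)
qed

lemmas lact_lact' = lact_lact[symmetric]

lemma cond0_lact:
  assumes F: "cond0 F" and ps: "ps F" and K: "additive K" "ccod X K = sdom X F"
  shows "cond0 (lact X K F)"
proof -
  note F' = cond0D[OF F]
  have k: "ar K" using K additive_ar by blast
  let ?A = "sdom X F" and ?A' = "cdom X K"
  let ?KK = "cross X K K"
  have D1: "Dseq (lact X K F) = lact X ?KK (Dseq F)" using ps K k by (simp add: Dseq_lact)
  have D2: "Dseq (lact X ?KK (Dseq F)) = lact X (cross X ?KK ?KK) (Dseq (Dseq F))" using ps K k by (simp add: Dseq_lact)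
  have s: "sdom X (lact X K F) = ?A'" "scod X (lact X K F) = scod X F" using ps K k by simp_all
  show ?thesis
  proof (rule cond0I, simp_all only: s D1 D2)
    have "lact X (cpair X (cid X ?A') (czero X ?A' ?A')) (lact X ?KK (Dseq F))
        = lact X K (lact X (cpair X (cid X ?A) (czero X ?A ?A)) (Dseq F))"
      using ps K k by (simp add: lact_lact)
    also have "\<dots> = szero X ?A' (scod X F)" using F'(1) ps K k by simp
    finally show "lact X (cpair X (cid X ?A') (czero X ?A' ?A')) (lact X ?KK (Dseq F)) = szero X ?A' (scod X F)" .
  next
    have "lact X (cross X (cpair X (cid X ?A') (czero X ?A' ?A')) (cpair X (czero X ?A' ?A') (cid X ?A'))) (lact X (cross X ?KK ?KK) (Dseq (Dseq F)))
        = lact X ?KK (lact X (cross X (cpair X (cid X ?A) (czero X ?A ?A)) (cpair X (czero X ?A ?A) (cid X ?A))) (Dseq (Dseq F)))"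
      using ps K k by (simp add: lact_lact)
    also have "\<dots> = lact X ?KK (Dseq F)" using F'(3) by simp
    finally show "lact X (cross X (cpair X (cid X ?A') (czero X ?A' ?A')) (cpair X (czero X ?A' ?A') (cid X ?A'))) (lact X (cross X ?KK ?KK) (Dseq (Dseq F)))
       = lact X ?KK (Dseq F)" .
  next
    have "lact X (cpair X (cross X (cpi0 X ?A' ?A') (cpi0 X ?A' ?A')) (cross X (cpi1 X ?A' ?A') (cpi1 X ?A' ?A'))) (lact X (cross X ?KK ?KK) (Dseq (Dseq F)))
        = lact X (cross X ?KK ?KK) (lact X (cpair X (cross X (cpi0 X ?A ?A) (cpi0 X ?A ?A)) (cross X (cpi1 X ?A ?A) (cpi1 X ?A ?A))) (Dseq (Dseq F)))"
      using ps K k by (simp add: lact_lact)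
    also have "\<dots> = lact X (cross X ?KK ?KK) (Dseq (Dseq F))" using F'(4) by simp
    finally show "lact X (cpair X (cross X (cpi0 X ?A' ?A') (cpi0 X ?A' ?A')) (cross X (cpi1 X ?A' ?A') (cpi1 X ?A' ?A'))) (lact X (cross X ?KK ?KK) (Dseq (Dseq F)))
        = lact X (cross X ?KK ?KK) (Dseq (Dseq F))" .
  next
    have "lact X (cross X (cid X ?A') (cadd X (cpi0 X ?A' ?A') (cpi1 X ?A' ?A'))) (lact X ?KK (Dseq F))
        = lact X (cross X K ?KK) (lact X (cross X (cid X ?A) (cadd X (cpi0 X ?A ?A) (cpi1 X ?A ?A))) (Dseq F))"
      using ps K k by (simp add: lact_lact)
    also have "\<dots> = lact X (cross X K ?KK) (sadd X (lact X (cross X (cid X ?A) (cpi0 X ?A ?A)) (Dseq F)) (lact X (cross X (cid X ?A) (cpi1 X ?A ?A)) (Dseq F)))"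
      using F'(2) by simp
    also have "\<dots> = sadd X (lact X (cross X K ?KK) (lact X (cross X (cid X ?A) (cpi0 X ?A ?A)) (Dseq F)))
                           (lact X (cross X K ?KK) (lact X (cross X (cid X ?A) (cpi1 X ?A ?A)) (Dseq F)))"
      by (rule lact_sadd) (use ps K k in simp_all)
    also have "\<dots> = sadd X (lact X (cross X (cid X ?A') (cpi0 X ?A' ?A')) (lact X ?KK (Dseq F)))
                           (lact X (cross X (cid X ?A') (cpi1 X ?A' ?A')) (lact X ?KK (Dseq F)))"
      using ps K k by (simp add: lact_lact)
    finally show "lact X (cross X (cid X ?A') (cadd X (cpi0 X ?A' ?A') (cpi1 X ?A' ?A'))) (lact X ?KK (Dseq F))
        = sadd X (lact X (cross X (cid X ?A') (cpi0 X ?A' ?A')) (lact X ?KK (Dseq F)))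
                 (lact X (cross X (cid X ?A') (cpi1 X ?A' ?A')) (lact X ?KK (Dseq F)))" .
  qed
qed

lemma dseq_lact[simp]: "dseq X f \<Longrightarrow> additive k \<Longrightarrow> ccod X k = sdom X f \<Longrightarrow> dseq X (lact X k f)"
proof (rule dseqI)
  assume f: "dseq X f" "additive k" "ccod X k = sdom X f"
  have k: "ar k" using f additive_ar by blast
  show "ps (lact X k f)" using f k by simp
  fix n show "cond0 ((Dseq ^^ n) (lact X k f))"
    using f k by (subst Dpow_lact) (simp_all add: cond0_lact dseq_cond0)
qed

lemma dseq_tan[simp]: "dseq X f \<Longrightarrow> dseq X (tan X f)"
  by (simp add: tan_spair)

lemma dseq_tanpow[simp]: "dseq X f \<Longrightarrow> dseq X ((tan X ^^ n) f)"
  by (induct n) auto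

lemma lact_iseq[simp]: "ar h \<Longrightarrow> ccod X h = B \<Longrightarrow> lact X h (iseq X B) = ract X (iseq X (cdom X h)) h"
  by (rule ext) (simp add: app_simps)

lemma Dpow_iseq: "A \<in> Ob \<Longrightarrow> (Dseq ^^ n) (iseq X A) = ract X (iseq X (Pn X n A)) (iseq X A n)"
  by (rule ext) (simp add: app_simps iseq_split)

lemma Dseq_iseq: "A \<in> Ob \<Longrightarrow> Dseq (iseq X A) = ract X (iseq X (cprod X A A)) (cpi1 X A A)"
  using Dpow_iseq[of A 1] by simp

lemma cond0_lift: "additive q \<Longrightarrow> cdom X q = A \<Longrightarrow> cond0 (ract X (iseq X A) q)"
proof -
  assume q: "additive q" "cdom X q = A"
  have k: "ar q" "A \<in> Ob" using q additive_ar by auto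
  have D1: "Dseq (ract X (iseq X A) q) = ract X (iseq X (cprod X A A)) (ccomp X (cpi1 X A A) q)"
    using k q by (simp add: Dseq_ract Dseq_iseq ract_ract)
  have D2: "Dseq (ract X (iseq X (cprod X A A)) (ccomp X (cpi1 X A A) q)) = ract X (iseq X (Pn X 2 A)) (ccomp X (cpi1 X (cprod X A A) (cprod X A A)) (ccomp X (cpi1 X A A) q))"
    using k q by (simp add: Dseq_ract Dseq_iseq ract_ract numeral_2_eq_2)
  have s: "sdom X (ract X (iseq X A) q) = A" "scod X (ract X (iseq X A) q) = ccod X q" using k q by simp_all
  show ?thesis
    by (rule cond0I; simp only: s D1 D2) (use k q in \<open>simp_all add: lact_ract ract_ract ract_sadd ract_zero numeral_2_eq_2\<close>)
qed

lemma dseq_lift[simp]: "additive q \<Longrightarrow> cdom X q = A \<Longrightarrow> dseq X (ract X (iseq X A) q)"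
proof (rule dseqI)
  assume q: "additive q" "cdom X q = A"
  have k: "ar q" "A \<in> Ob" using q additive_ar by auto
  show "ps (ract X (iseq X A) q)" using k q by simp
  fix n
  have "(Dseq ^^ n) (ract X (iseq X A) q) = ract X (iseq X (Pn X n A)) (ccomp X (iseq X A n) q)"
    using k q by (simp add: Dpow_ract Dpow_iseq ract_ract)
  thus "cond0 ((Dseq ^^ n) (ract X (iseq X A) q))"
    using k q by (simp add: cond0_lift)
qed

lemma dseq_iseq[simp]: "A \<in> Ob \<Longrightarrow> dseq X (iseq X A)"
  using dseq_lift[of "cid X A" A] by simp

end

context CL
begin

lemma ract_szero_add[simp]: "additive k \<Longrightarrow> A \<in> Ob \<Longrightarrow> cdom X k = B \<Longrightarrow> ract X (szero X A B) k = szero X A (ccod X k)"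
  by (rule ext) (simp add: app_simps)

lemma key1:
  assumes h: "dseq X h"
  shows "lact X (cpair X (cid X (sdom X h)) (czero X (sdom X h) (sdom X h))) (tan X h)
       = ract X h (cpair X (cid X (scod X h)) (czero X (scod X h) (scod X h)))"
proof -
  note H = cond0D[OF dseq_cond0'[OF h]]
  have p: "ps h" using h by simp
  let ?A = "sdom X h" and ?B = "scod X h"
  have "lact X (cpair X (cid X ?A) (czero X ?A ?A)) (tan X h)
      = spair X (lact X (cpair X (cid X ?A) (czero X ?A ?A)) (lact X (cpi0 X ?A ?A) h)) (lact X (cpair X (cid X ?A) (czero X ?A ?A)) (Dseq h))"
    using p by (simp add: tan_spair lact_spair)
  also have "\<dots> = spair X h (szero X ?A ?B)"
    using p H(1) by (simp add: lact_lact)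
  also have "\<dots> = ract X h (cpair X (cid X ?B) (czero X ?B ?B))"
    using p by (simp add: ract_pair ract_zero)
  finally show ?thesis .
qed

lemma key2:
  assumes h: "dseq X h"
  defines "A \<equiv> sdom X h" and "B \<equiv> scod X h"
  defines "u \<equiv> spair X (lact X (cpi0 X A (cprod X A A)) h)
                 (spair X (lact X (cross X (cid X A) (cpi0 X A A)) (Dseq h)) (lact X (cross X (cid X A) (cpi1 X A A)) (Dseq h)))"
  shows "lact X (cross X (cid X A) (cadd X (cpi0 X A A) (cpi1 X A A))) (tan X h) = ract X u (cross X (cid X B) (cadd X (cpi0 X B B) (cpi1 X B B)))"
    and "lact X (cross X (cid X A) (cpi0 X A A)) (tan X h) = ract X u (cross X (cid X B) (cpi0 X B B))"
    and "lact X (cross X (cid X A) (cpi1 X A A)) (tan X h) = ract X u (cross X (cid X B) (cpi1 X B B))"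
    and "ps u" "sdom X u = cprod X A (cprod X A A)" "scod X u = cprod X B (cprod X B B)"
proof -
  note H = cond0D[OF dseq_cond0'[OF h], folded A_def B_def]
  have p: "ps h" using h by simp
  have o: "A \<in> Ob" "B \<in> Ob" using p A_def B_def by simp_all
  show pu: "ps u" "sdom X u = cprod X A (cprod X A A)" "scod X u = cprod X B (cprod X B B)"
    using p o unfolding u_def A_def B_def by simp_all
  have "lact X (cross X (cid X A) (cadd X (cpi0 X A A) (cpi1 X A A))) (tan X h)
     = spair X (lact X (cpi0 X A (cprod X A A)) h) (lact X (cross X (cid X A) (cadd X (cpi0 X A A) (cpi1 X A A))) (Dseq h))"
    using p o by (simp add: tan_spair lact_spair lact_lact A_def)
  also have "\<dots> = spair X (lact X (cpi0 X A (cprod X A A)) h)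
        (sadd X (lact X (cross X (cid X A) (cpi0 X A A)) (Dseq h)) (lact X (cross X (cid X A) (cpi1 X A A)) (Dseq h)))"
    using H(2) by simp
  also have "\<dots> = ract X u (cross X (cid X B) (cadd X (cpi0 X B B) (cpi1 X B B)))"
    unfolding u_def using p o by (intro ext) (simp add: app_simps A_def B_def)
  finally show "lact X (cross X (cid X A) (cadd X (cpi0 X A A) (cpi1 X A A))) (tan X h) = ract X u (cross X (cid X B) (cadd X (cpi0 X B B) (cpi1 X B B)))" .
  have "lact X (cross X (cid X A) (cpi0 X A A)) (tan X h)
     = spair X (lact X (cpi0 X A (cprod X A A)) h) (lact X (cross X (cid X A) (cpi0 X A A)) (Dseq h))"
    using p o by (simp add: tan_spair lact_spair lact_lact A_def)
  also have "\<dots> = ract X u (cross X (cid X B) (cpi0 X B B))"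
    unfolding u_def using p o by (intro ext) (simp add: app_simps A_def B_def)
  finally show "lact X (cross X (cid X A) (cpi0 X A A)) (tan X h) = ract X u (cross X (cid X B) (cpi0 X B B))" .
  have "lact X (cross X (cid X A) (cpi1 X A A)) (tan X h)
     = spair X (lact X (cpi0 X A (cprod X A A)) h) (lact X (cross X (cid X A) (cpi1 X A A)) (Dseq h))"
    using p o by (simp add: tan_spair lact_spair lact_lact A_def)
  also have "\<dots> = ract X u (cross X (cid X B) (cpi1 X B B))"
    unfolding u_def using p o by (intro ext) (simp add: app_simps A_def B_def)
  finally show "lact X (cross X (cid X A) (cpi1 X A A)) (tan X h) = ract X u (cross X (cid X B) (cpi1 X B B))" .
qed

lemma Dseq_tan: "ps h \<Longrightarrow> Dseq (tan X h) = spair X (lact X (cross X (cpi0 X (sdom X h) (sdom X h)) (cpi0 X (sdom X h) (sdom X h))) (Dseq h)) (Dseq (Dseq h))"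
  by (simp add: tan_spair Dseq_spair Dseq_lact)

lemma key3:
  assumes h: "dseq X h"
  defines "A \<equiv> sdom X h" and "B \<equiv> scod X h"
  shows "lact X (cross X (cpair X (cid X A) (czero X A A)) (cpair X (czero X A A) (cid X A))) (tan X (tan X h))
       = ract X (tan X h) (cross X (cpair X (cid X B) (czero X B B)) (cpair X (czero X B B) (cid X B)))"
proof -
  note H = cond0D[OF dseq_cond0'[OF h], folded A_def B_def]
  have p: "ps h" using h by simp
  have o: "A \<in> Ob" "B \<in> Ob" using p A_def B_def by simp_all
  let ?e = "cpair X (cid X A) (czero X A A)" and ?e2 = "cpair X (czero X A A) (cid X A)"
  let ?eB = "cpair X (cid X B) (czero X B B)" and ?e2B = "cpair X (czero X B B) (cid X B)"
  let ?p0 = "cpi0 X A A"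
  have x1: "ccomp X (cross X ?e ?e2) (cpi0 X (cprod X A A) (cprod X A A)) = ccomp X ?p0 ?e" using o by simp
  have x2: "ccomp X (cross X ?e ?e2) (cross X ?p0 ?p0) = ccomp X ?p0 ?e" using o by (simp add: cross_def)
  have "lact X (cross X ?e ?e2) (tan X (tan X h))
      = spair X (lact X (ccomp X (cross X ?e ?e2) (cpi0 X (cprod X A A) (cprod X A A))) (tan X h))
                (spair X (lact X (ccomp X (cross X ?e ?e2) (cross X ?p0 ?p0)) (Dseq h)) (lact X (cross X ?e ?e2) (Dseq (Dseq h))))"
    using p o by (simp add: tan_spair[of "tan X h"] Dseq_tan lact_spair lact_lact A_def)
  also have "\<dots> = spair X (lact X ?p0 (lact X ?e (tan X h))) (spair X (lact X ?p0 (lact X ?e (Dseq h))) (Dseq h))"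
    unfolding x1 x2 using p o H(3) by (simp add: lact_lact A_def)
  also have "\<dots> = spair X (lact X ?p0 (ract X h ?eB)) (spair X (szero X (cprod X A A) B) (Dseq h))"
    using key1[OF h] H(1) p o by (simp add: A_def B_def)
  also have "\<dots> = ract X (tan X h) (cross X ?eB ?e2B)"
    using p o by (simp add: tan_spair ract_spair_cross lact_ract ract_pair ract_zero lact_spair A_def B_def)
  finally show ?thesis .
qed

lemma key4:
  assumes h: "dseq X h"
  defines "A \<equiv> sdom X h" and "B \<equiv> scod X h"
  shows "lact X (cpair X (cross X (cpi0 X A A) (cpi0 X A A)) (cross X (cpi1 X A A) (cpi1 X A A))) (tan X (tan X h))
       = ract X (tan X (tan X h)) (cpair X (cross X (cpi0 X B B) (cpi0 X B B)) (cross X (cpi1 X B B) (cpi1 X B B)))"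
proof -
  note H = cond0D[OF dseq_cond0'[OF h], folded A_def B_def]
  have p: "ps h" using h by simp
  have o: "A \<in> Ob" "B \<in> Ob" using p A_def B_def by simp_all
  let ?p0 = "cpi0 X A A" and ?p1 = "cpi1 X A A"
  let ?c = "cpair X (cross X ?p0 ?p0) (cross X ?p1 ?p1)"
  let ?P0 = "cpi0 X (cprod X A A) (cprod X A A)"
  have x1: "ccomp X ?c (cross X ?p0 ?p0) = ?P0" using o by (simp add: cross_def)
  have "lact X ?c (tan X (tan X h))
      = spair X (spair X (lact X (ccomp X ?P0 ?p0) h) (lact X (cross X ?p0 ?p0) (Dseq h)))
                (spair X (lact X (ccomp X ?c (cross X ?p0 ?p0)) (Dseq h)) (lact X ?c (Dseq (Dseq h))))"
    using p o by (simp add: tan_spair Dseq_spair Dseq_lact lact_spair lact_lact A_def)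
  also have "\<dots> = spair X (spair X (lact X (ccomp X ?P0 ?p0) h) (lact X (cross X ?p0 ?p0) (Dseq h)))
                (spair X (lact X ?P0 (Dseq h)) (Dseq (Dseq h)))"
    unfolding x1 H(4) ..
  also have "\<dots> = ract X (tan X (tan X h)) (cpair X (cross X (cpi0 X B B) (cpi0 X B B)) (cross X (cpi1 X B B) (cpi1 X B B)))"
    using p o by (intro ext) (simp add: app_simps A_def B_def)
  finally show ?thesis .
qed

end

context CL
begin

lemma cond0_scomp:
  assumes h: "dseq X h" and g: "dseq X g" and t: "scod X h = sdom X g"
  shows "cond0 (scomp X h g)"
proof -
  note G = cond0D[OF dseq_cond0'[OF g]]
  have ph: "ps h" and pg: "ps g" using h g by simp_all
  let ?A = "sdom X h" and ?B = "scod X h" and ?C = "scod X g"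
  have o: "?A \<in> Ob" "?B \<in> Ob" "?C \<in> Ob" using ph pg by simp_all
  have D1: "Dseq (scomp X h g) = scomp X (tan X h) (Dseq g)" by (rule Dseq_scomp)
  have D2: "Dseq (scomp X (tan X h) (Dseq g)) = scomp X (tan X (tan X h)) (Dseq (Dseq g))" by (rule Dseq_scomp)
  have s: "sdom X (scomp X h g) = ?A" "scod X (scomp X h g) = ?C" using ph pg t by simp_all
  note G' = G[folded t]
  show ?thesis
  proof (rule cond0I, simp_all only: s D1 D2)
    let ?e = "cpair X (cid X ?A) (czero X ?A ?A)"
    have "lact X ?e (scomp X (tan X h) (Dseq g)) = scomp X (lact X ?e (tan X h)) (Dseq g)"
      using ph pg t o by (simp add: scomp_lact)
    also have "\<dots> = scomp X (ract X h (cpair X (cid X ?B) (czero X ?B ?B))) (Dseq g)"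
      by (simp only: key1[OF h])
    also have "\<dots> = scomp X h (lact X (cpair X (cid X ?B) (czero X ?B ?B)) (Dseq g))"
      using ph pg t o by (simp add: scomp_ract)
    also have "\<dots> = szero X ?A ?C"
      using ph pg t o G'(1) by (simp add: scomp_szero)
    finally show "lact X ?e (scomp X (tan X h) (Dseq g)) = szero X ?A ?C" .
  next
    let ?e = "cross X (cpair X (cid X ?A) (czero X ?A ?A)) (cpair X (czero X ?A ?A) (cid X ?A))"
    have "lact X ?e (scomp X (tan X (tan X h)) (Dseq (Dseq g))) = scomp X (lact X ?e (tan X (tan X h))) (Dseq (Dseq g))"
      using ph pg t o by (simp add: scomp_lact)
    also have "\<dots> = scomp X (ract X (tan X h) (cross X (cpair X (cid X ?B) (czero X ?B ?B)) (cpair X (czero X ?B ?B) (cid X ?B)))) (Dseq (Dseq g))"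
      by (simp only: key3[OF h])
    also have "\<dots> = scomp X (tan X h) (lact X (cross X (cpair X (cid X ?B) (czero X ?B ?B)) (cpair X (czero X ?B ?B) (cid X ?B))) (Dseq (Dseq g)))"
      using ph pg t o by (simp add: scomp_ract)
    also have "\<dots> = scomp X (tan X h) (Dseq g)"
      using G'(3) by simp
    finally show "lact X ?e (scomp X (tan X (tan X h)) (Dseq (Dseq g))) = scomp X (tan X h) (Dseq g)" .
  next
    let ?e = "cpair X (cross X (cpi0 X ?A ?A) (cpi0 X ?A ?A)) (cross X (cpi1 X ?A ?A) (cpi1 X ?A ?A))"
    have "lact X ?e (scomp X (tan X (tan X h)) (Dseq (Dseq g))) = scomp X (lact X ?e (tan X (tan X h))) (Dseq (Dseq g))"
      using ph pg t o by (simp add: scomp_lact)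
    also have "\<dots> = scomp X (ract X (tan X (tan X h)) (cpair X (cross X (cpi0 X ?B ?B) (cpi0 X ?B ?B)) (cross X (cpi1 X ?B ?B) (cpi1 X ?B ?B)))) (Dseq (Dseq g))"
      by (simp only: key4[OF h])
    also have "\<dots> = scomp X (tan X (tan X h)) (lact X (cpair X (cross X (cpi0 X ?B ?B) (cpi0 X ?B ?B)) (cross X (cpi1 X ?B ?B) (cpi1 X ?B ?B))) (Dseq (Dseq g)))"
      using ph pg t o by (simp add: scomp_ract)
    also have "\<dots> = scomp X (tan X (tan X h)) (Dseq (Dseq g))"
      using G'(4) by simp
    finally show "lact X ?e (scomp X (tan X (tan X h)) (Dseq (Dseq g))) = scomp X (tan X (tan X h)) (Dseq (Dseq g))" .
  next
    let ?s = "cross X (cid X ?A) (cadd X (cpi0 X ?A ?A) (cpi1 X ?A ?A))"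
    let ?sa = "cross X (cid X ?A) (cpi0 X ?A ?A)" and ?sb = "cross X (cid X ?A) (cpi1 X ?A ?A)"
    let ?t = "cross X (cid X ?B) (cadd X (cpi0 X ?B ?B) (cpi1 X ?B ?B))"
    let ?ta = "cross X (cid X ?B) (cpi0 X ?B ?B)" and ?tb = "cross X (cid X ?B) (cpi1 X ?B ?B)"
    define u where "u \<equiv> spair X (lact X (cpi0 X ?A (cprod X ?A ?A)) h)
                 (spair X (lact X ?sa (Dseq h)) (lact X ?sb (Dseq h)))"
    note K = key2[OF h, folded u_def]
    have "lact X ?s (scomp X (tan X h) (Dseq g)) = scomp X (lact X ?s (tan X h)) (Dseq g)"
      using ph pg t o by (simp add: scomp_lact)
    also have "\<dots> = scomp X (ract X u ?t) (Dseq g)"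
      by (simp only: K(1))
    also have "\<dots> = scomp X u (lact X ?t (Dseq g))"
      using ph pg t o K(4-6) by (simp add: scomp_ract)
    also have "\<dots> = scomp X u (sadd X (lact X ?ta (Dseq g)) (lact X ?tb (Dseq g)))"
      using G'(2) by simp
    also have "\<dots> = sadd X (scomp X u (lact X ?ta (Dseq g))) (scomp X u (lact X ?tb (Dseq g)))"
      using ph pg t o K(4-6) by (simp add: scomp_sadd)
    also have "\<dots> = sadd X (scomp X (ract X u ?ta) (Dseq g)) (scomp X (ract X u ?tb) (Dseq g))"
      using ph pg t o K(4-6) by (simp add: scomp_ract)
    also have "\<dots> = sadd X (scomp X (lact X ?sa (tan X h)) (Dseq g)) (scomp X (lact X ?sb (tan X h)) (Dseq g))"
      by (simp only: K(2,3))
    also have "\<dots> = sadd X (lact X ?sa (scomp X (tan X h) (Dseq g))) (lact X ?sb (scomp X (tan X h) (Dseq g)))"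
      using ph pg t o by (simp add: scomp_lact)
    finally show "lact X ?s (scomp X (tan X h) (Dseq g)) = sadd X (lact X ?sa (scomp X (tan X h) (Dseq g))) (lact X ?sb (scomp X (tan X h) (Dseq g)))" .
  qed
qed

lemma dseq_scomp[simp]: "dseq X f \<Longrightarrow> dseq X g \<Longrightarrow> scod X f = sdom X g \<Longrightarrow> dseq X (scomp X f g)"
proof (rule dseqI)
  assume f: "dseq X f" "dseq X g" "scod X f = sdom X g"
  show "ps (scomp X f g)" using f by simp
  fix n show "cond0 ((Dseq ^^ n) (scomp X f g))"
    unfolding Dpow_scomp by (rule cond0_scomp) (use f in simp_all)
qed

end

lemma Dcat_sel[simp]:
  "cObj (Dcat X) = cObj X" "cArr (Dcat X) = {f. dseq X f}" "cdom (Dcat X) = sdom X" "ccod (Dcat X) = scod X"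
  "ccomp (Dcat X) = scomp X" "cid (Dcat X) = iseq X" "cadd (Dcat X) = sadd X" "czero (Dcat X) = szero X"
  "cprod (Dcat X) = cprod X" "cterm (Dcat X) = cterm X"
  "cpi0 (Dcat X) = (\<lambda>A B. ract X (iseq X (cprod X A B)) (cpi0 X A B))"
  "cpi1 (Dcat X) = (\<lambda>A B. ract X (iseq X (cprod X A B)) (cpi1 X A B))"
  "cpair (Dcat X) = spair X"
  by (simp_all add: Dcat_def spair_def[abs_def])

context CL
begin

lemma hom_Dcat: "f \<in> hom (Dcat X) A B \<longleftrightarrow> dseq X f \<and> sdom X f = A \<and> scod X f = B"
  by (simp add: hom_def)

lemma sadd_comm: "ps f \<Longrightarrow> ps g \<Longrightarrow> sdom X g = sdom X f \<Longrightarrow> scod X g = scod X f \<Longrightarrow> sadd X f g = sadd X g f"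
  by (rule ext) (simp add: app_simps add_comm)

lemma sadd_assoc: "ps f \<Longrightarrow> ps g \<Longrightarrow> ps h \<Longrightarrow> sdom X g = sdom X f \<Longrightarrow> scod X g = scod X f \<Longrightarrow>
  sdom X h = sdom X f \<Longrightarrow> scod X h = scod X f \<Longrightarrow> sadd X (sadd X f g) h = sadd X f (sadd X g h)"
  by (rule ext) (simp add: app_simps)

lemma sadd_szero_right: "ps f \<Longrightarrow> sadd X f (szero X (sdom X f) (scod X f)) = f"
  by (rule ext) (simp add: app_simps)

lemma Dcat_clac: "is_clac (Dcat X)"
proof -
  have c1: "\<forall>f\<in>cArr (Dcat X). cdom (Dcat X) f \<in> cObj (Dcat X) \<and> ccod (Dcat X) f \<in> cObj (Dcat X)"
    by simp
  have c2: "\<forall>A\<in>cObj (Dcat X). cid (Dcat X) A \<in> hom (Dcat X) A A"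
    by (simp add: hom_Dcat)
  have c3: "\<forall>A\<in>cObj (Dcat X). \<forall>B\<in>cObj (Dcat X). \<forall>C\<in>cObj (Dcat X). \<forall>f\<in>hom (Dcat X) A B. \<forall>g\<in>hom (Dcat X) B C.
        ccomp (Dcat X) f g \<in> hom (Dcat X) A C"
    by (simp add: hom_Dcat)
  have c4: "\<forall>A\<in>cObj (Dcat X). \<forall>B\<in>cObj (Dcat X). \<forall>C\<in>cObj (Dcat X). \<forall>D\<in>cObj (Dcat X).
        \<forall>f\<in>hom (Dcat X) A B. \<forall>g\<in>hom (Dcat X) B C. \<forall>h\<in>hom (Dcat X) C D.
        ccomp (Dcat X) (ccomp (Dcat X) f g) h = ccomp (Dcat X) f (ccomp (Dcat X) g h)"
    by (simp add: hom_Dcat scomp_assoc)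
  have c5: "\<forall>A\<in>cObj (Dcat X). \<forall>B\<in>cObj (Dcat X). \<forall>f\<in>hom (Dcat X) A B.
        ccomp (Dcat X) (cid (Dcat X) A) f = f \<and> ccomp (Dcat X) f (cid (Dcat X) B) = f"
    by (simp add: hom_Dcat)
  have c6: "\<forall>A\<in>cObj (Dcat X). \<forall>B\<in>cObj (Dcat X). \<forall>f\<in>hom (Dcat X) A B. \<forall>g\<in>hom (Dcat X) A B.
        cadd (Dcat X) f g \<in> hom (Dcat X) A B \<and> cadd (Dcat X) f g = cadd (Dcat X) g f"
    by (auto simp add: hom_Dcat intro: sadd_comm)
  have c7: "\<forall>A\<in>cObj (Dcat X). \<forall>B\<in>cObj (Dcat X). \<forall>f\<in>hom (Dcat X) A B. \<forall>g\<in>hom (Dcat X) A B. \<forall>h\<in>hom (Dcat X) A B.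
        cadd (Dcat X) (cadd (Dcat X) f g) h = cadd (Dcat X) f (cadd (Dcat X) g h)"
    by (auto simp add: hom_Dcat intro: sadd_assoc)
  have c8: "\<forall>A\<in>cObj (Dcat X). \<forall>B\<in>cObj (Dcat X). czero (Dcat X) A B \<in> hom (Dcat X) A B \<and>
        (\<forall>f\<in>hom (Dcat X) A B. cadd (Dcat X) f (czero (Dcat X) A B) = f)"
    by (auto simp add: hom_Dcat sadd_szero_right)
  have c9: "\<forall>A\<in>cObj (Dcat X). \<forall>B\<in>cObj (Dcat X). \<forall>C\<in>cObj (Dcat X). \<forall>f\<in>hom (Dcat X) A B. \<forall>g\<in>hom (Dcat X) B C. \<forall>h\<in>hom (Dcat X) B C.
        ccomp (Dcat X) f (cadd (Dcat X) g h) = cadd (Dcat X) (ccomp (Dcat X) f g) (ccomp (Dcat X) f h)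
      \<and> ccomp (Dcat X) f (czero (Dcat X) B C) = czero (Dcat X) A C"
    by (auto simp add: hom_Dcat scomp_sadd scomp_szero)
  have c10: "cterm (Dcat X) \<in> cObj (Dcat X)" by simp
  have c11: "\<forall>A\<in>cObj (Dcat X). \<exists>!h. h \<in> hom (Dcat X) A (cterm (Dcat X))"
  proof
    fix A assume A: "A \<in> cObj (Dcat X)"
    show "\<exists>!h. h \<in> hom (Dcat X) A (cterm (Dcat X))"
    proof (rule ex1I[of _ "szero X A (cterm X)"])
      show "szero X A (cterm X) \<in> hom (Dcat X) A (cterm (Dcat X))" using A by (simp add: hom_Dcat)
      fix h assume "h \<in> hom (Dcat X) A (cterm (Dcat X))"
      hence h: "dseq X h" "sdom X h = A" "scod X h = cterm X" by (simp_all add: hom_Dcat)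
      show "h = szero X A (cterm X)"
      proof (rule ext)
        fix n show "h n = szero X A (cterm X) n"
          by (rule term_uniq) (use h A in \<open>simp_all add: app_simps\<close>)
      qed
    qed
  qed
  have c12: "\<forall>A\<in>cObj (Dcat X). \<forall>B\<in>cObj (Dcat X). cprod (Dcat X) A B \<in> cObj (Dcat X)
        \<and> cpi0 (Dcat X) A B \<in> hom (Dcat X) (cprod (Dcat X) A B) A \<and> cpi1 (Dcat X) A B \<in> hom (Dcat X) (cprod (Dcat X) A B) B"
    by (simp add: hom_Dcat)
  have c13: "\<forall>A\<in>cObj (Dcat X). \<forall>B\<in>cObj (Dcat X). \<forall>C\<in>cObj (Dcat X). \<forall>f\<in>hom (Dcat X) C A. \<forall>g\<in>hom (Dcat X) C B.
        cpair (Dcat X) f g \<in> hom (Dcat X) C (cprod (Dcat X) A B)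
      \<and> ccomp (Dcat X) (cpair (Dcat X) f g) (cpi0 (Dcat X) A B) = f
      \<and> ccomp (Dcat X) (cpair (Dcat X) f g) (cpi1 (Dcat X) A B) = g"
    by (auto simp add: hom_Dcat scomp_lift_right)
  have c14: "\<forall>A\<in>cObj (Dcat X). \<forall>B\<in>cObj (Dcat X). \<forall>C\<in>cObj (Dcat X). \<forall>h\<in>hom (Dcat X) C (cprod (Dcat X) A B).
        h = cpair (Dcat X) (ccomp (Dcat X) h (cpi0 (Dcat X) A B)) (ccomp (Dcat X) h (cpi1 (Dcat X) A B))"
  proof (intro ballI)
    fix A B C h assume a: "A \<in> cObj (Dcat X)" "B \<in> cObj (Dcat X)" "C \<in> cObj (Dcat X)" "h \<in> hom (Dcat X) C (cprod (Dcat X) A B)"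
    hence h: "dseq X h" "sdom X h = C" "scod X h = cprod X A B" "A \<in> Ob" "B \<in> Ob" by (simp_all add: hom_Dcat)
    show "h = cpair (Dcat X) (ccomp (Dcat X) h (cpi0 (Dcat X) A B)) (ccomp (Dcat X) h (cpi1 (Dcat X) A B))"
      using h by (simp add: scomp_lift_right) (rule ext, simp add: app_simps)
  qed
  have c15: "\<forall>A\<in>cObj (Dcat X). \<forall>B\<in>cObj (Dcat X). \<forall>C\<in>cObj (Dcat X). \<forall>f\<in>hom (Dcat X) C (cprod (Dcat X) A B). \<forall>g\<in>hom (Dcat X) C (cprod (Dcat X) A B).
        ccomp (Dcat X) (cadd (Dcat X) f g) (cpi0 (Dcat X) A B) = cadd (Dcat X) (ccomp (Dcat X) f (cpi0 (Dcat X) A B)) (ccomp (Dcat X) g (cpi0 (Dcat X) A B))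
      \<and> ccomp (Dcat X) (cadd (Dcat X) f g) (cpi1 (Dcat X) A B) = cadd (Dcat X) (ccomp (Dcat X) f (cpi1 (Dcat X) A B)) (ccomp (Dcat X) g (cpi1 (Dcat X) A B))"
  proof (intro ballI)
    fix A B C f g assume a: "A \<in> cObj (Dcat X)" "B \<in> cObj (Dcat X)" "C \<in> cObj (Dcat X)"
      "f \<in> hom (Dcat X) C (cprod (Dcat X) A B)" "g \<in> hom (Dcat X) C (cprod (Dcat X) A B)"
    hence h: "dseq X f" "sdom X f = C" "scod X f = cprod X A B" "dseq X g" "sdom X g = C" "scod X g = cprod X A B" "A \<in> Ob" "B \<in> Ob"
      by (simp_all add: hom_Dcat)
    show "ccomp (Dcat X) (cadd (Dcat X) f g) (cpi0 (Dcat X) A B) = cadd (Dcat X) (ccomp (Dcat X) f (cpi0 (Dcat X) A B)) (ccomp (Dcat X) g (cpi0 (Dcat X) A B))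
      \<and> ccomp (Dcat X) (cadd (Dcat X) f g) (cpi1 (Dcat X) A B) = cadd (Dcat X) (ccomp (Dcat X) f (cpi1 (Dcat X) A B)) (ccomp (Dcat X) g (cpi1 (Dcat X) A B))"
      using h by (simp add: scomp_lift_right) (intro conjI ext; simp add: app_simps proj_add)
  qed
  have c16: "\<forall>A\<in>cObj (Dcat X). \<forall>B\<in>cObj (Dcat X). \<forall>C\<in>cObj (Dcat X).
        ccomp (Dcat X) (czero (Dcat X) C (cprod (Dcat X) A B)) (cpi0 (Dcat X) A B) = czero (Dcat X) C A
      \<and> ccomp (Dcat X) (czero (Dcat X) C (cprod (Dcat X) A B)) (cpi1 (Dcat X) A B) = czero (Dcat X) C B"
    by (simp add: scomp_lift_right)
  show ?thesis unfolding is_clac_def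
    using c1 c2 c3 c4 c5 c6 c7 c8 c9 c10 c11 c12 c13 c14 c15 c16 by (intro conjI)
qed

end

context CL
begin

definition lift :: "'a \<Rightarrow> nat \<Rightarrow> 'a" where
  "lift k = ract X (iseq X (cdom X k)) k"

lemmas Dsel = Dcat_sel(1-5,9,10)

lemma Pobj_D[simp]: "Pobj (Dcat X) = Pobj X"
  by (rule ext) (simp add: Pobj_def)

lemma Pn_D[simp]: "Pn (Dcat X) = Pn X"
  by (intro ext) (simp add: Pn_def)

lemma ps_lift[simp]: "ar k \<Longrightarrow> ps (lift k)"
  and sdom_lift[simp]: "ar k \<Longrightarrow> sdom X (lift k) = cdom X k"
  and scod_lift[simp]: "ar k \<Longrightarrow> scod X (lift k) = ccod X k"
  by (simp_all add: lift_def)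

lemma LD1: "A \<in> Ob \<Longrightarrow> cid (Dcat X) A = lift (cid X A)"
  by (simp add: lift_def)

lemma LD2: "A \<in> Ob \<Longrightarrow> B \<in> Ob \<Longrightarrow> czero (Dcat X) A B = lift (czero X A B)"
  by (simp add: lift_def ract_zero)

lemma LD3: "A \<in> Ob \<Longrightarrow> B \<in> Ob \<Longrightarrow> cpi0 (Dcat X) A B = lift (cpi0 X A B)"
  "A \<in> Ob \<Longrightarrow> B \<in> Ob \<Longrightarrow> cpi1 (Dcat X) A B = lift (cpi1 X A B)"
  by (simp_all add: lift_def)

lemma LD4: "ar a \<Longrightarrow> ar b \<Longrightarrow> cdom X a = cdom X b \<Longrightarrow> cpair (Dcat X) (lift a) (lift b) = lift (cpair X a b)"
  by (simp add: lift_def) (rule ext, simp add: app_simps)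

lemma LD5: "ar a \<Longrightarrow> ar b \<Longrightarrow> cdom X a = cdom X b \<Longrightarrow> ccod X a = ccod X b \<Longrightarrow> cadd (Dcat X) (lift a) (lift b) = lift (cadd X a b)"
  by (simp add: lift_def) (rule ext, simp add: app_simps)

lemma comp_lift: "ar a \<Longrightarrow> ar b \<Longrightarrow> ccod X a = cdom X b \<Longrightarrow> scomp X (lift a) (lift b) = lift (ccomp X a b)"
proof -
  assume a: "ar a" "ar b" "ccod X a = cdom X b"
  have "scomp X (lift a) (lift b) = ract X (lift a) b"
    unfolding lift_def[of b] by (rule scomp_lift_right) (use a in simp_all)
  also have "\<dots> = lift (ccomp X a b)" using a by (simp add: lift_def ract_ract)
  finally show ?thesis .
qed

lemma LD6: "ar a \<Longrightarrow> ar b \<Longrightarrow> cross (Dcat X) (lift a) (lift b) = lift (cross X a b)"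
proof -
  assume a: "ar a" "ar b"
  show ?thesis unfolding cross_def[of "Dcat X"] cross_def[of X]
    using a by (simp del: Dcat_sel add: Dsel LD3 LD4 comp_lift)
qed

lemma LD7: "ar a \<Longrightarrow> Pnarr (Dcat X) n (lift a) = lift (Pnarr X n a)"
proof (induct n)
  case 0 then show ?case by (simp add: Pnarr_def)
next
  case (Suc n)
  have "Pnarr (Dcat X) (Suc n) (lift a) = cross (Dcat X) (Pnarr (Dcat X) n (lift a)) (Pnarr (Dcat X) n (lift a))"
    by (simp add: Pnarr_def Parr_def)
  also have "\<dots> = lift (Pnarr X (Suc n) a)" using Suc by (simp add: LD6)
  finally show ?case .
qed

lemma LD8: "ps G \<Longrightarrow> ar h \<Longrightarrow> ccod X h = sdom X G \<Longrightarrow>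
  lact (Dcat X) (lift h) (\<lambda>m. (Dseq ^^ m) G) = (\<lambda>m. (Dseq ^^ m) (lact X h G))"
proof (rule ext)
  fix m assume a: "ps G" "ar h" "ccod X h = sdom X G"
  have "lact (Dcat X) (lift h) (\<lambda>m. (Dseq ^^ m) G) m = scomp X (lift (Pnarr X m h)) ((Dseq ^^ m) G)"
    using a by (simp add: lact_def LD7)
  also have "\<dots> = lact X (Pnarr X m h) ((Dseq ^^ m) G)"
    unfolding lift_def by (rule scomp_lift_left) (use a in simp_all)
  also have "\<dots> = (Dseq ^^ m) (lact X h G)" using a by (simp add: Dpow_lact)
  finally show "lact (Dcat X) (lift h) (\<lambda>m. (Dseq ^^ m) G) m = (Dseq ^^ m) (lact X h G)" .
qed

lemma LD9: "sadd (Dcat X) (\<lambda>m. (Dseq ^^ m) a) (\<lambda>m. (Dseq ^^ m) b) = (\<lambda>m. (Dseq ^^ m) (sadd X a b))"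
  by (rule ext) (simp add: sadd_def[of "Dcat X"] Dpow_sadd)

lemma LD10: "szero (Dcat X) A B = (\<lambda>m. (Dseq ^^ m) (szero X A B))"
  by (rule ext) (simp add: szero_def[of "Dcat X"] Dpow_szero)

lemma LD11: "(Dseq ^^ k) (\<lambda>m. (Dseq ^^ m) f) = (\<lambda>m. (Dseq ^^ m) ((Dseq ^^ k) f))"
  by (rule ext) (simp add: Dpow_app Dpow_Dpow)

lemma LD11': "Dseq (\<lambda>m. (Dseq ^^ m) f) = (\<lambda>m. (Dseq ^^ m) (Dseq f))"
  by (rule ext) (simp add: Dseq_app funpow_swap1)

lemma LD12: "sdom (Dcat X) (\<lambda>m. (Dseq ^^ m) f) = sdom X f" "scod (Dcat X) (\<lambda>m. (Dseq ^^ m) f) = scod X f"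
  by (simp_all add: sdom_def scod_def)

lemma dlt_inj: "(\<lambda>m. (Dseq ^^ m) a) = (\<lambda>m. (Dseq ^^ m) b) \<longleftrightarrow> a = b"
  by (metis funpow_0)

lemma dseq_delta: "dseq X f \<Longrightarrow> dseq (Dcat X) (\<lambda>m. (Dseq ^^ m) f)"
proof -
  assume f: "dseq X f"
  have p: "ps f" using f by simp
  have pre: "pre_dseq (Dcat X) (\<lambda>m. (Dseq ^^ m) f)"
    unfolding pre_dseq_def using f p by (simp add: hom_Dcat LD12 del: Dcat_sel)
  have cX: "\<And>n. conds (Pn X n (sdom X f)) (scod X f) ((Dseq ^^ (n + 1)) f) ((Dseq ^^ (n + 2)) f)"
    using dseq_cond0[OF f] p unfolding cond0_def by (simp add: numeral_2_eq_2)
  show ?thesis unfolding dseq_def[of "Dcat X"] Let_def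
    apply (intro conjI allI pre)
    subgoal for n using p cX[of n, unfolded conds_def]
      by (simp del: Dcat_sel add: Dsel LD1 LD2 LD3 LD4 LD5 LD6 LD8 LD9 LD10 LD11 LD11' LD12)
    subgoal for n using p cX[of n, unfolded conds_def]
      by (simp del: Dcat_sel add: Dsel LD1 LD2 LD3 LD4 LD5 LD6 LD8 LD9 LD10 LD11 LD11' LD12)
    subgoal for n using p cX[of n, unfolded conds_def]
      by (simp del: Dcat_sel add: Dsel LD1 LD2 LD3 LD4 LD5 LD6 LD8 LD9 LD10 LD11 LD11' LD12)
    subgoal for n using p cX[of n, unfolded conds_def]
      by (simp del: Dcat_sel add: Dsel LD1 LD2 LD3 LD4 LD5 LD6 LD8 LD9 LD10 LD11 LD11' LD12)
    done
qed

end

lemma deltaF_sel[simp]: "fobj deltaF = id" "farr deltaF = (\<lambda>f n. (Dseq ^^ n) f)"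
  by (simp_all add: deltaF_def)

lemma epsF_sel[simp]: "fobj epsF = id" "farr epsF = (\<lambda>f. f 0)"
  by (simp_all add: epsF_def)

context CL
begin

lemma iseq_D: "A \<in> Ob \<Longrightarrow> iseq (Dcat X) A n = (Dseq ^^ n) (iseq X A)"
proof (induct n)
  case 0 then show ?case by simp
next
  case (Suc n)
  have "iseq (Dcat X) A (Suc n) = scomp X (lift (cpi1 X (Pn X n A) (Pn X n A))) ((Dseq ^^ n) (iseq X A))"
    using Suc by (simp add: LD3 del: Dcat_sel) (simp add: Dsel)
  also have "\<dots> = lact X (cpi1 X (Pn X n A) (Pn X n A)) ((Dseq ^^ n) (iseq X A))"
    unfolding lift_def by (rule scomp_lift_left) (use Suc in simp_all)
  also have "\<dots> = (Dseq ^^ Suc n) (iseq X A)"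
    using Suc by (simp add: Dpow_iseq lact_ract ract_ract del: funpow.simps)
  finally show ?case .
qed

lemma tan_D: "ps f \<Longrightarrow> tan (Dcat X) (\<lambda>m. (Dseq ^^ m) f) = (\<lambda>m. (Dseq ^^ m) (tan X f))"
proof (rule ext)
  fix n assume p: "ps f"
  have "tan (Dcat X) (\<lambda>m. (Dseq ^^ m) f) n
     = spair X (scomp X (lift (Pnarr X n (cpi0 X (sdom X f) (sdom X f)))) ((Dseq ^^ n) f)) ((Dseq ^^ Suc n) f)"
    using p by (simp add: tan_def LD12 LD3 LD7 del: Dcat_sel funpow.simps) (simp add: Dsel)
  also have "\<dots> = spair X (lact X (Pnarr X n (cpi0 X (sdom X f) (sdom X f))) ((Dseq ^^ n) f)) ((Dseq ^^ Suc n) f)"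
    using p unfolding lift_def by (subst scomp_lift_left) simp_all
  also have "\<dots> = (Dseq ^^ n) (tan X f)"
    using p by (simp add: tan_spair Dpow_spair Dpow_lact funpow_swap1)
  finally show "tan (Dcat X) (\<lambda>m. (Dseq ^^ m) f) n = (Dseq ^^ n) (tan X f)" .
qed

lemma tanpow_D: "ps f \<Longrightarrow> (tan (Dcat X) ^^ k) (\<lambda>m. (Dseq ^^ m) f) = (\<lambda>m. (Dseq ^^ m) ((tan X ^^ k) f))"
  by (induct k) (simp_all add: tan_D del: Dcat_sel)

lemma deltaF_sclf: "is_sclf (Dcat X) (Dcat (Dcat X)) deltaF"
proof -
  have h: "\<And>f A B. f \<in> hom (Dcat X) A B \<Longrightarrow> dseq X f \<and> sdom X f = A \<and> scod X f = B"
    by (simp add: hom_Dcat)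
  show ?thesis unfolding is_sclf_def
  proof (intro conjI ballI)
    fix A B f assume "A \<in> cObj (Dcat X)" "B \<in> cObj (Dcat X)" "f \<in> hom (Dcat X) A B"
    hence f: "dseq X f" "sdom X f = A" "scod X f = B" using h by auto
    show "farr deltaF f \<in> hom (Dcat (Dcat X)) (fobj deltaF A) (fobj deltaF B)"
      using f dseq_delta[OF f(1)] LD12[of f] by (simp add: hom_def del: Dcat_sel) (simp add: Dsel)
  next
    fix A assume A: "A \<in> cObj (Dcat X)"
    show "farr deltaF (cid (Dcat X) A) = cid (Dcat (Dcat X)) (fobj deltaF A)"
      using A by (simp del: Dcat_sel add: Dsel) (rule ext, simp add: iseq_D)
  next
    fix A B C f g assume a: "A \<in> cObj (Dcat X)" "B \<in> cObj (Dcat X)" "C \<in> cObj (Dcat X)"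
      "f \<in> hom (Dcat X) A B" "g \<in> hom (Dcat X) B C"
    hence f: "dseq X f" "sdom X f = A" "scod X f = B" "dseq X g" "sdom X g = B" "scod X g = C" using h by auto
    show "farr deltaF (ccomp (Dcat X) f g) = ccomp (Dcat (Dcat X)) (farr deltaF f) (farr deltaF g)"
      using f by (simp add: tanpow_D Dpow_scomp) (rule ext, simp add: scomp_def[of "Dcat X"] tanpow_D)
  next
    fix A B assume a: "A \<in> cObj (Dcat X)" "B \<in> cObj (Dcat X)"
    show "fobj deltaF (cprod (Dcat X) A B) = cprod (Dcat (Dcat X)) (fobj deltaF A) (fobj deltaF B)" by simp
    show "farr deltaF (cpi0 (Dcat X) A B) = cpi0 (Dcat (Dcat X)) (fobj deltaF A) (fobj deltaF B)"
      using a by (simp add: Dpow_ract) (rule ext, simp add: ract_def[of "Dcat X"] app_simps iseq_D scomp_lift_right)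
    show "farr deltaF (cpi1 (Dcat X) A B) = cpi1 (Dcat (Dcat X)) (fobj deltaF A) (fobj deltaF B)"
      using a by (simp add: Dpow_ract) (rule ext, simp add: ract_def[of "Dcat X"] app_simps iseq_D scomp_lift_right)
  next
    show "fobj deltaF (cterm (Dcat X)) = cterm (Dcat (Dcat X))" by simp
  next
    fix A B f g assume a: "A \<in> cObj (Dcat X)" "B \<in> cObj (Dcat X)" "f \<in> hom (Dcat X) A B" "g \<in> hom (Dcat X) A B"
    show "farr deltaF (cadd (Dcat X) f g) = cadd (Dcat (Dcat X)) (farr deltaF f) (farr deltaF g)"
      using LD9 by (simp add: Dpow_sadd)
  next
    fix A B assume a: "A \<in> cObj (Dcat X)" "B \<in> cObj (Dcat X)"
    show "farr deltaF (czero (Dcat X) A B) = czero (Dcat (Dcat X)) (fobj deltaF A) (fobj deltaF B)"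
      by (simp add: Dpow_szero) (rule ext, simp add: szero_def[of "Dcat X"])
  qed simp_all
qed

lemma epsF_sclf: "is_sclf (Dcat X) X epsF"
proof -
  have h: "\<And>f A B. f \<in> hom (Dcat X) A B \<Longrightarrow> dseq X f \<and> sdom X f = A \<and> scod X f = B"
    by (simp add: hom_Dcat)
  show ?thesis unfolding is_sclf_def
  proof (intro conjI ballI)
    fix A B f assume "A \<in> cObj (Dcat X)" "B \<in> cObj (Dcat X)" "f \<in> hom (Dcat X) A B"
    hence f: "dseq X f" "sdom X f = A" "scod X f = B" using h by auto
    show "farr epsF f \<in> hom X (fobj epsF A) (fobj epsF B)"
      using f by (simp add: hom_iff)
  next
    fix A B C f g assume a: "A \<in> cObj (Dcat X)" "B \<in> cObj (Dcat X)" "C \<in> cObj (Dcat X)"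
      "f \<in> hom (Dcat X) A B" "g \<in> hom (Dcat X) B C"
    show "farr epsF (ccomp (Dcat X) f g) = ccomp X (farr epsF f) (farr epsF g)"
      by (simp add: app_simps)
  qed (simp_all add: app_simps)
qed

end

locale CL2 = X: CL X + Y: CL Y for X :: "('o, 'a) clac" and Y :: "('p, 'b) clac" +
  fixes F :: "('o, 'p, 'a, 'b) sfun"
  assumes sclf: "is_sclf X Y F"
begin

lemma F_ob[simp]: "A \<in> cObj X \<Longrightarrow> fobj F A \<in> cObj Y"
  using sclf unfolding is_sclf_def by blast

lemma F_ty: "f \<in> cArr X \<Longrightarrow> farr F f \<in> cArr Y \<and> cdom Y (farr F f) = fobj F (cdom X f) \<and> ccod Y (farr F f) = fobj F (ccod X f)"
proof -
  assume f: "f \<in> cArr X"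
  have "f \<in> hom X (cdom X f) (ccod X f)" using f by (simp add: X.hom_iff)
  hence "farr F f \<in> hom Y (fobj F (cdom X f)) (fobj F (ccod X f))"
    using sclf f unfolding is_sclf_def by (meson X.cod_ob X.dom_ob)
  thus ?thesis by (simp add: Y.hom_iff)
qed

lemma F_ar[simp]: "f \<in> cArr X \<Longrightarrow> farr F f \<in> cArr Y"
  and F_dom[simp]: "f \<in> cArr X \<Longrightarrow> cdom Y (farr F f) = fobj F (cdom X f)"
  and F_cod[simp]: "f \<in> cArr X \<Longrightarrow> ccod Y (farr F f) = fobj F (ccod X f)"
  using F_ty by auto

lemma F_id[simp]: "A \<in> cObj X \<Longrightarrow> farr F (cid X A) = cid Y (fobj F A)"
  using sclf unfolding is_sclf_def by blast

lemma F_comp[simp]: "f \<in> cArr X \<Longrightarrow> g \<in> cArr X \<Longrightarrow> ccod X f = cdom X g \<Longrightarrow>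
  farr F (ccomp X f g) = ccomp Y (farr F f) (farr F g)"
proof -
  assume a: "f \<in> cArr X" "g \<in> cArr X" "ccod X f = cdom X g"
  have "f \<in> hom X (cdom X f) (ccod X f)" "g \<in> hom X (ccod X f) (ccod X g)" using a by (simp_all add: X.hom_iff)
  thus ?thesis using sclf a unfolding is_sclf_def by (meson X.cod_ob X.dom_ob)
qed

lemma F_prod[simp]: "A \<in> cObj X \<Longrightarrow> B \<in> cObj X \<Longrightarrow> fobj F (cprod X A B) = cprod Y (fobj F A) (fobj F B)"
  and F_pi0[simp]: "A \<in> cObj X \<Longrightarrow> B \<in> cObj X \<Longrightarrow> farr F (cpi0 X A B) = cpi0 Y (fobj F A) (fobj F B)"
  and F_pi1[simp]: "A \<in> cObj X \<Longrightarrow> B \<in> cObj X \<Longrightarrow> farr F (cpi1 X A B) = cpi1 Y (fobj F A) (fobj F B)"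
  using sclf unfolding is_sclf_def by blast+

lemma F_term[simp]: "fobj F (cterm X) = cterm Y"
  using sclf unfolding is_sclf_def by blast

lemma F_add[simp]: "f \<in> cArr X \<Longrightarrow> g \<in> cArr X \<Longrightarrow> cdom X f = cdom X g \<Longrightarrow> ccod X f = ccod X g \<Longrightarrow>
  farr F (cadd X f g) = cadd Y (farr F f) (farr F g)"
proof -
  assume a: "f \<in> cArr X" "g \<in> cArr X" "cdom X f = cdom X g" "ccod X f = ccod X g"
  have "f \<in> hom X (cdom X f) (ccod X f)" "g \<in> hom X (cdom X f) (ccod X f)" using a by (simp_all add: X.hom_iff)
  thus ?thesis using sclf a unfolding is_sclf_def by (meson X.cod_ob X.dom_ob)
qed

lemma F_zero[simp]: "A \<in> cObj X \<Longrightarrow> B \<in> cObj X \<Longrightarrow> farr F (czero X A B) = czero Y (fobj F A) (fobj F B)"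
  using sclf unfolding is_sclf_def by blast

lemma F_pair[simp]: "f \<in> cArr X \<Longrightarrow> g \<in> cArr X \<Longrightarrow> cdom X f = cdom X g \<Longrightarrow>
  farr F (cpair X f g) = cpair Y (farr F f) (farr F g)"
proof -
  assume a: "f \<in> cArr X" "g \<in> cArr X" "cdom X f = cdom X g"
  have e0: "ccomp Y (farr F (cpair X f g)) (cpi0 Y (fobj F (ccod X f)) (fobj F (ccod X g))) = farr F f"
    using a F_comp[of "cpair X f g" "cpi0 X (ccod X f) (ccod X g)"] by simp
  have e1: "ccomp Y (farr F (cpair X f g)) (cpi1 Y (fobj F (ccod X f)) (fobj F (ccod X g))) = farr F g"
    using a F_comp[of "cpair X f g" "cpi1 X (ccod X f) (ccod X g)"] by simp
  show ?thesis
    by (rule Y.pair_ext[of _ _ "fobj F (ccod X f)" "fobj F (ccod X g)"]) (use a e0 e1 in simp_all)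
qed

lemma F_cross[simp]: "f \<in> cArr X \<Longrightarrow> g \<in> cArr X \<Longrightarrow> farr F (cross X f g) = cross Y (farr F f) (farr F g)"
  by (simp add: cross_def)

lemma F_Pn[simp]: "A \<in> cObj X \<Longrightarrow> fobj F (Pn X n A) = Pn Y n (fobj F A)"
  by (induct n) simp_all

lemma F_Pnarr[simp]: "h \<in> cArr X \<Longrightarrow> farr F (Pnarr X n h) = Pnarr Y n (farr F h)"
  by (induct n) simp_all

lemma F_iseq[simp]: "A \<in> cObj X \<Longrightarrow> farr F (iseq X A n) = iseq Y (fobj F A) n"
  by (induct n) simp_all

definition Fs :: "(nat \<Rightarrow> 'a) \<Rightarrow> nat \<Rightarrow> 'b" where
  "Fs f = (\<lambda>n. farr F (f n))"

lemma Fs_app: "Fs f n = farr F (f n)"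
  by (simp add: Fs_def)

lemma Fs_ps[simp]: "pre_dseq X f \<Longrightarrow> pre_dseq Y (Fs f)"
  and Fs_sdom[simp]: "pre_dseq X f \<Longrightarrow> sdom Y (Fs f) = fobj F (sdom X f)"
  and Fs_scod[simp]: "pre_dseq X f \<Longrightarrow> scod Y (Fs f) = fobj F (scod X f)"
proof -
  assume f: "pre_dseq X f"
  show s: "sdom Y (Fs f) = fobj F (sdom X f)" using f by (subst (1) sdom_def) (simp add: Fs_app)
  show "scod Y (Fs f) = fobj F (scod X f)" using f by (subst (1) scod_def) (simp add: Fs_app)
  show "pre_dseq Y (Fs f)" by (rule Y.psI2[where A="fobj F (sdom X f)" and B="fobj F (scod X f)"]) (use f in \<open>simp_all add: Fs_app\<close>)
qed

lemma Fs_lact[simp]: "pre_dseq X f \<Longrightarrow> h \<in> cArr X \<Longrightarrow> ccod X h = sdom X f \<Longrightarrow> Fs (lact X h f) = lact Y (farr F h) (Fs f)"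
  by (rule ext) (simp add: Fs_app X.app_simps Y.app_simps)

lemma Fs_ract[simp]: "pre_dseq X f \<Longrightarrow> k \<in> cArr X \<Longrightarrow> cdom X k = scod X f \<Longrightarrow> Fs (ract X f k) = ract Y (Fs f) (farr F k)"
  by (rule ext) (simp add: Fs_app X.app_simps Y.app_simps)

lemma Fs_sadd[simp]: "pre_dseq X f \<Longrightarrow> pre_dseq X g \<Longrightarrow> sdom X g = sdom X f \<Longrightarrow> scod X g = scod X f \<Longrightarrow>
  Fs (sadd X f g) = sadd Y (Fs f) (Fs g)"
  by (rule ext) (simp add: Fs_app X.app_simps Y.app_simps)

lemma Fs_szero[simp]: "A \<in> cObj X \<Longrightarrow> B \<in> cObj X \<Longrightarrow> Fs (szero X A B) = szero Y (fobj F A) (fobj F B)"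
  by (rule ext) (simp add: Fs_app X.app_simps Y.app_simps)

lemma Fs_Dpow[simp]: "Fs ((Dseq ^^ k) f) = (Dseq ^^ k) (Fs f)"
  by (rule ext) (simp add: Fs_app X.app_simps Y.app_simps)

lemma Fs_Dseq[simp]: "Fs (Dseq f) = Dseq (Fs f)"
  by (rule ext) (simp add: Fs_app X.app_simps Y.app_simps)

lemma Fs_tan[simp]: "pre_dseq X f \<Longrightarrow> Fs (tan X f) = tan Y (Fs f)"
  by (rule ext) (simp add: Fs_app X.app_simps Y.app_simps)

lemma Fs_tanpow[simp]: "pre_dseq X f \<Longrightarrow> Fs ((tan X ^^ k) f) = (tan Y ^^ k) (Fs f)"
  by (induct k) simp_all

lemma Fs_scomp[simp]: "pre_dseq X f \<Longrightarrow> pre_dseq X g \<Longrightarrow> scod X f = sdom X g \<Longrightarrow> Fs (scomp X f g) = scomp Y (Fs f) (Fs g)"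
proof (rule ext)
  fix n assume a: "pre_dseq X f" "pre_dseq X g" "scod X f = sdom X g"
  have "farr F ((tan X ^^ n) f 0) = (tan Y ^^ n) (Fs f) 0"
    using Fs_tanpow[OF a(1), of n] by (metis Fs_app)
  thus "Fs (scomp X f g) n = scomp Y (Fs f) (Fs g) n"
    using a by (simp add: Fs_app X.app_simps Y.app_simps)
qed

lemma Fs_iseq[simp]: "A \<in> cObj X \<Longrightarrow> Fs (iseq X A) = iseq Y (fobj F A)"
  by (rule ext) (simp add: Fs_app)

lemma Fs_dseq[simp]: "dseq X f \<Longrightarrow> dseq Y (Fs f)"
proof -
  assume f: "dseq X f"
  have p: "pre_dseq X f" using f by simp
  have cX: "\<And>n. X.conds (Pn X n (sdom X f)) (scod X f) ((Dseq ^^ (n + 1)) f) ((Dseq ^^ (n + 2)) f)"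
    using X.dseq_cond0[OF f] p unfolding X.cond0_def by (simp add: numeral_2_eq_2)
  show ?thesis unfolding dseq_def[of Y] Let_def
    apply (intro conjI allI)
    subgoal using p by simp
    subgoal for n using p arg_cong[OF cX[of n, unfolded X.conds_def, THEN conjunct1], of Fs]
      by (simp del: Fs_Dpow add: Fs_Dpow[symmetric])
    subgoal for n using p arg_cong[OF cX[of n, unfolded X.conds_def, THEN conjunct2, THEN conjunct1], of Fs]
      by (simp del: Fs_Dpow add: Fs_Dpow[symmetric])
    subgoal for n using p arg_cong[OF cX[of n, unfolded X.conds_def, THEN conjunct2, THEN conjunct2, THEN conjunct1], of Fs]
      by (simp del: Fs_Dpow add: Fs_Dpow[symmetric])
    subgoal for n using p arg_cong[OF cX[of n, unfolded X.conds_def, THEN conjunct2, THEN conjunct2, THEN conjunct2], of Fs]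
      by (simp del: Fs_Dpow add: Fs_Dpow[symmetric])
    done
qed

lemma Dfun_sel[simp]: "fobj (Dfun F) = fobj F" "farr (Dfun F) = Fs"
  by (simp_all add: Dfun_def Fs_def[abs_def])

lemma Dfun_sclf: "is_sclf (Dcat X) (Dcat Y) (Dfun F)"
proof -
  have h: "\<And>f A B. f \<in> hom (Dcat X) A B \<Longrightarrow> dseq X f \<and> sdom X f = A \<and> scod X f = B"
    by (simp add: X.hom_Dcat)
  show ?thesis unfolding is_sclf_def
  proof (intro conjI ballI)
    fix A B f assume "A \<in> cObj (Dcat X)" "B \<in> cObj (Dcat X)" "f \<in> hom (Dcat X) A B"
    hence f: "dseq X f" "sdom X f = A" "scod X f = B" using h by auto
    show "farr (Dfun F) f \<in> hom (Dcat Y) (fobj (Dfun F) A) (fobj (Dfun F) B)"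
      using f by (simp add: Y.hom_Dcat)
  next
    fix A B C f g assume a: "A \<in> cObj (Dcat X)" "B \<in> cObj (Dcat X)" "C \<in> cObj (Dcat X)"
      "f \<in> hom (Dcat X) A B" "g \<in> hom (Dcat X) B C"
    hence f: "dseq X f" "sdom X f = A" "scod X f = B" "dseq X g" "sdom X g = B" "scod X g = C" using h by auto
    show "farr (Dfun F) (ccomp (Dcat X) f g) = ccomp (Dcat Y) (farr (Dfun F) f) (farr (Dfun F) g)"
      using f by simp
  next
    fix A B f g assume a: "A \<in> cObj (Dcat X)" "B \<in> cObj (Dcat X)" "f \<in> hom (Dcat X) A B" "g \<in> hom (Dcat X) A B"
    hence f: "dseq X f" "sdom X f = A" "scod X f = B" "dseq X g" "sdom X g = A" "scod X g = B" using h by auto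
    show "farr (Dfun F) (cadd (Dcat X) f g) = cadd (Dcat Y) (farr (Dfun F) f) (farr (Dfun F) g)"
      using f by simp
  qed simp_all
qed

end


lemma Dpow_app_gen: "(Dseq ^^ k) f n = f (n + k)"
  by (induct k arbitrary: n) (auto simp: Dseq_def)

theorem proposition4p14:
  fixes X :: "('o, 'a) clac"
  assumes "is_clac X"
  shows
    \<comment> \<open>D is an endofunctor of CLAC\<close>
    "is_clac (Dcat X)
   \<and> feq (Dcat X) (Dfun (idF :: ('o, 'o, 'a, 'a) sfun)) idF
   \<and> (\<forall>(Y :: ('p, 'b) clac) (F :: ('o, 'p, 'a, 'b) sfun).
        is_clac Y \<and> is_sclf X Y F \<longrightarrow>
          is_sclf (Dcat X) (Dcat Y) (Dfun F)
          \<comment> \<open>naturality of epsilon and delta\<close>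
        \<and> feq (Dcat X) (fcompose epsF F) (fcompose (Dfun F) epsF)
        \<and> feq (Dcat X) (fcompose deltaF (Dfun (Dfun F))) (fcompose (Dfun F) deltaF))
   \<and> (\<forall>(Y :: ('p, 'b) clac) (Z :: ('q, 'c) clac)
        (F :: ('o, 'p, 'a, 'b) sfun) (G :: ('p, 'q, 'b, 'c) sfun).
        is_clac Y \<and> is_clac Z \<and> is_sclf X Y F \<and> is_sclf Y Z G \<longrightarrow>
          feq (Dcat X) (Dfun (fcompose F G)) (fcompose (Dfun F) (Dfun G)))
    \<comment> \<open>components of epsilon and delta are morphisms of CLAC\<close>
   \<and> is_sclf (Dcat X) X epsF
   \<and> is_sclf (Dcat X) (Dcat (Dcat X)) deltaF
    \<comment> \<open>comonad laws (diagrammatic order)\<close>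
   \<and> feq (Dcat X) (fcompose deltaF epsF) idF
   \<and> feq (Dcat X) (fcompose deltaF (Dfun epsF)) idF
   \<and> feq (Dcat X) (fcompose deltaF deltaF) (fcompose deltaF (Dfun deltaF))"
proof -
  interpret CL X by (rule CL.intro) (rule assms)
  have part3: "\<forall>(Y :: ('p, 'b) clac) (F :: ('o, 'p, 'a, 'b) sfun).
        is_clac Y \<and> is_sclf X Y F \<longrightarrow>
          is_sclf (Dcat X) (Dcat Y) (Dfun F)
        \<and> feq (Dcat X) (fcompose epsF F) (fcompose (Dfun F) epsF)
        \<and> feq (Dcat X) (fcompose deltaF (Dfun (Dfun F))) (fcompose (Dfun F) deltaF)"
  proof (intro allI impI conjI)
    fix Y :: "('p, 'b) clac" and F :: "('o, 'p, 'a, 'b) sfun"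
    assume a: "is_clac Y \<and> is_sclf X Y F"
    interpret C2: CL2 X Y F
      by (intro CL2.intro CL.intro CL2_axioms.intro) (use a assms in auto)
    show "is_sclf (Dcat X) (Dcat Y) (Dfun F)" by (rule C2.Dfun_sclf)
    show "feq (Dcat X) (fcompose epsF F) (fcompose (Dfun F) epsF)"
      by (simp add: feq_def fcompose_def Dfun_def epsF_def)
    show "feq (Dcat X) (fcompose deltaF (Dfun (Dfun F))) (fcompose (Dfun F) deltaF)"
      by (simp add: feq_def fcompose_def Dfun_def deltaF_def Dpow_app_gen fun_eq_iff)
  qed
  have part4: "\<forall>(Y :: ('p, 'b) clac) (Z :: ('q, 'c) clac)
        (F :: ('o, 'p, 'a, 'b) sfun) (G :: ('p, 'q, 'b, 'c) sfun).
        is_clac Y \<and> is_clac Z \<and> is_sclf X Y F \<and> is_sclf Y Z G \<longrightarrow>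
          feq (Dcat X) (Dfun (fcompose F G)) (fcompose (Dfun F) (Dfun G))"
    by (simp add: feq_def fcompose_def Dfun_def)
  have c1: "feq (Dcat X) (Dfun (idF :: ('o, 'o, 'a, 'a) sfun)) idF"
    by (simp add: feq_def Dfun_def idF_def)
  have c7: "feq (Dcat X) (fcompose deltaF epsF) idF"
    by (simp add: feq_def fcompose_def deltaF_def epsF_def idF_def)
  have c8: "feq (Dcat X) (fcompose deltaF (Dfun epsF)) idF"
    by (simp add: feq_def fcompose_def deltaF_def epsF_def idF_def Dfun_def Dpow_app_gen)
  have c9: "feq (Dcat X) (fcompose deltaF deltaF) (fcompose deltaF (Dfun deltaF))"
    by (simp add: feq_def fcompose_def deltaF_def Dfun_def Dpow_app_gen fun_eq_iff add.commute add.left_commute)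
  show ?thesis
    using Dcat_clac c1 part3 part4 epsF_sclf deltaF_sclf c7 c8 c9 by blast
qed


end
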